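(* Let $n \geq 1$, let $Q, R$ be fixed real symmetric positive semidefinite $n \times n$ matrices and $S = \begin{pmatrix} Q & 0 \\ 0 & R \end{pmatrix}$, with eigenvalues $s_1 \geq \dots \geq s_r > 0 = s_{r+1} = \dots = s_{2n}$. Let $U, V$ be independent Haar-distributed random $n\times n$ orthogonal matrices with $j$-th columns $u_j, v_j$. Let $N_1,\dots,N_n, M_1, \dots, M_n$ be i.i.d. $\chi^2_n$ random variables independent of $(U,V)$, set $a_j = \begin{pmatrix} \sqrt{N_j}\, u_j \\ \sqrt{M_j}\, v_j \end{pmatrix}$ and $\zeta_j = a_j^\top S a_j$. For any nonempty $\mathcal{S} \subset \{1,\dots,r\}$, let $r_{\mathcal{S}} = |\mathcal{S}|$ and $G_{\mathcal{S}} = \left[\prod_{l \in \mathcal{S}} s_l\right]^{1/r_{\mathcal{S}}}$. Then $$\mathbb{E}\min_{j \leq n} \zeta_j \geq \frac{1}{e}\, r_{\mathcal{S}}\, n^{-\frac{2}{r_{\mathcal{S}}}}\, G_{\mathcal{S}}.$$ *)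

theory Defs
  imports "HOL-Probability.Probability" "HOL-Computational_Algebra.Polynomial"
begin

definition psd_matrix :: "real^'n^'n \<Rightarrow> bool" where
  "psd_matrix A \<longleftrightarrow> transpose A = A \<and> (\<forall>x. 0 \<le> x \<bullet> (A *v x))"

definition charpoly :: "real^'n^'n \<Rightarrow> real poly" where
  "charpoly A = det (\<chi> i j. if i = j then [:- (A$i$j), 1:] else [:- (A$i$j):])"

definition eigen_mset :: "real^'n^'n \<Rightarrow> real multiset" where
  "eigen_mset A = proots (charpoly A)"

(* eigenvalues in non-increasing order, 1-indexed: s 1 \<ge> s 2 \<ge> ... *)
definition eig_desc :: "real^'n^'n \<Rightarrow> nat \<Rightarrow> real" where
  "eig_desc A l = rev (sorted_list_of_multiset (eigen_mset A)) ! (l - 1)"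

definition block_diag :: "real^'n^'n \<Rightarrow> real^'n^'n \<Rightarrow> real^('n + 'n)^('n + 'n)" where
  "block_diag Q R = (\<chi> i j. case (i, j) of
      (Inl a, Inl b) \<Rightarrow> Q$a$b
    | (Inr a, Inr b) \<Rightarrow> R$a$b
    | _ \<Rightarrow> 0)"

definition vstack :: "real^'n \<Rightarrow> real^'n \<Rightarrow> real^('n + 'n)" where
  "vstack x y = (\<chi> i. case i of Inl a \<Rightarrow> x$a | Inr a \<Rightarrow> y$a)"

(* Haar (uniform) probability measure on the orthogonal group O(n):
   a Borel probability measure on n x n matrices concentrated on O(n) and
   invariant under left multiplication by orthogonal matrices (this
   characterizes the Haar measure uniquely). *)
definition haar_orthogonal :: "(real^'n^'n) measure \<Rightarrow> bool" where
  "haar_orthogonal H \<longleftrightarrow> prob_space H \<and> sets H = sets borel \<and>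
     emeasure H {A. orthogonal_matrix A} = 1 \<and>
     (\<forall>P. orthogonal_matrix P \<longrightarrow> distr H borel (\<lambda>A. P ** A) = H)"

definition chi2_density :: "nat \<Rightarrow> real \<Rightarrow> real" where
  "chi2_density k x = (if x > 0 then
      x powr (real k / 2 - 1) * exp (- x / 2) / (2 powr (real k / 2) * Gamma (real k / 2))
    else 0)"

definition chi2 :: "nat \<Rightarrow> real measure" where
  "chi2 k = density lborel (\<lambda>x. ennreal (chi2_density k x))"

end

theory Submission
  imports Defs "HOL-Analysis.Change_Of_Vars" "HOL-Library.Numeral_Type"
begin

definition diagm :: "('n::finite \<Rightarrow> real) \<Rightarrow> real^'n^'n" where
  "diagm d = (\<chi> i j. if i = j then d i else 0)"

lemma sym_inner: fixes A :: "real^'n^'n"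
  assumes "transpose A = A" shows "x \<bullet> (A *v y) = (A *v x) \<bullet> y"
proof -
  have "x \<bullet> (A *v y) = (x v* A) \<bullet> y" by (simp add: dot_lmul_matrix)
  also have "x v* A = transpose A *v x" by (simp add: transpose_matrix_vector)
  finally show ?thesis using assms by simp
qed

lemma sym_eigvec_exists:
  fixes A :: "real^'n^'n"
  assumes sym: "transpose A = A" and W: "subspace W" "W \<noteq> {0}"
    and inv: "\<And>x. x \<in> W \<Longrightarrow> A *v x \<in> W"
  shows "\<exists>v \<mu>. v \<in> W \<and> norm v = 1 \<and> A *v v = \<mu> *\<^sub>R v"
proof -
  let ?K = "W \<inter> sphere 0 1"
  let ?f = "\<lambda>x. x \<bullet> (A *v x)"
  have cK: "compact ?K"
    using W(1) by (simp add: closed_subspace closed_Int_compact)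
  have neK: "?K \<noteq> {}"
  proof -
    obtain y where y: "y \<in> W" "y \<noteq> 0" using W subspace_0 by blast
    then have "y /\<^sub>R norm y \<in> ?K" using W(1) by (simp add: subspace_scale)
    then show ?thesis by blast
  qed
  have cf: "continuous_on ?K ?f"
  proof -
    have "continuous_on UNIV (\<lambda>x. A *v x)"
      by (rule linear_continuous_on) (simp add: matrix_vector_mul_bounded_linear)
    then have "continuous_on UNIV ?f" by (intro continuous_on_inner continuous_on_id)
    then show ?thesis by (rule continuous_on_subset) simp
  qed
  obtain v where v: "v \<in> ?K" and vmax0: "\<forall>y\<in>?K. ?f y \<le> ?f v"
    using continuous_attains_sup[OF cK neK cf] by blast
  have vmax: "?f y \<le> ?f v" if "y \<in> ?K" for y using vmax0 that by blast
  define \<mu> where "\<mu> = ?f v"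
  have vW: "v \<in> W" and nv: "norm v = 1" using v by auto
  have bound: "?f x \<le> \<mu> * (x \<bullet> x)" if "x \<in> W" for x
  proof (cases "x = 0")
    case True then show ?thesis by simp
  next
    case False
    then have "x /\<^sub>R norm x \<in> ?K" using that W(1) by (simp add: subspace_scale)
    then have "?f (x /\<^sub>R norm x) \<le> \<mu>" using vmax \<mu>_def by blast
    moreover have "?f (x /\<^sub>R norm x) = ?f x / (norm x)^2"
      by (simp add: matrix_vector_mult_scaleR power2_eq_square divide_inverse)
    moreover have "x \<bullet> x = (norm x)^2" by (simp add: power2_norm_eq_inner)
    ultimately show ?thesis using False by (simp add: divide_le_eq mult.commute)
  qed
  have key: "w \<bullet> (A *v v - \<mu> *\<^sub>R v) = 0" if w: "w \<in> W" for w
  proof -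
    define c where "c = w \<bullet> (A *v v - \<mu> *\<^sub>R v)"
    define d where "d = ?f w - \<mu> * (w \<bullet> w)"
    have d: "d \<le> 0" using bound[OF w] d_def by simp
    have cc: "c = w \<bullet> (A *v v) - \<mu> * (w \<bullet> v)" by (simp add: c_def inner_diff_right)
    have ineq: "2 * t * c + t^2 * d \<le> 0" for t
    proof -
      have "v + t *\<^sub>R w \<in> W" using W(1) vW w by (simp add: subspace_add subspace_scale)
      then have A: "?f (v + t *\<^sub>R w) \<le> \<mu> * ((v + t *\<^sub>R w) \<bullet> (v + t *\<^sub>R w))" by (rule bound)
      have e1: "v \<bullet> (A *v w) = w \<bullet> (A *v v)"
        using sym_inner[OF sym, of v w] by (simp add: inner_commute)
      have "?f (v + t *\<^sub>R w) = ?f v + t * (v \<bullet> (A *v w)) + t * (w \<bullet> (A *v v)) + t^2 * ?f w"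
        by (simp add: matrix_vector_right_distrib matrix_vector_mult_scaleR inner_add_left inner_add_right power2_eq_square algebra_simps)
      then have B: "?f (v + t *\<^sub>R w) = \<mu> + 2 * t * (w \<bullet> (A *v v)) + t^2 * ?f w"
        using e1 by (simp add: \<mu>_def)
      have "(v + t *\<^sub>R w) \<bullet> (v + t *\<^sub>R w) = v \<bullet> v + 2 * t * (w \<bullet> v) + t^2 * (w \<bullet> w)"
        by (simp only: inner_add_left inner_add_right inner_scaleR_left inner_scaleR_right inner_commute[of v w]) (simp add: algebra_simps power2_eq_square)
      moreover have "v \<bullet> v = 1" using nv by (simp add: norm_eq_1)
      ultimately have C: "(v + t *\<^sub>R w) \<bullet> (v + t *\<^sub>R w) = 1 + 2 * t * (w \<bullet> v) + t^2 * (w \<bullet> w)" by simp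
      have "2 * t * c + t^2 * d = (\<mu> + 2 * t * (w \<bullet> (A *v v)) + t^2 * ?f w) - \<mu> * (1 + 2 * t * (w \<bullet> v) + t^2 * (w \<bullet> w))"
        by (simp add: cc d_def algebra_simps)
      then show ?thesis using A B C by simp
    qed
    define s where "s = 1 / (1 + \<bar>d\<bar>)"
    have s: "s > 0" "s * \<bar>d\<bar> \<le> 1" by (auto simp: s_def field_simps)
    have "2 * (s*c) * c + (s*c)^2 * d \<le> 0" by (rule ineq)
    then have "c^2 * (s * (2 + s * d)) \<le> 0" by (simp add: power2_eq_square algebra_simps)
    moreover have "s * (2 + s * d) > 0"
    proof -
      have "s * d = - (s * \<bar>d\<bar>)" using d by simp
      then have "2 + s * d > 0" using s by linarith
      then show ?thesis using s by simp
    qed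
    ultimately have "c^2 \<le> 0" using mult_le_cancel_right_pos[of "s * (2 + s * d)" "c^2" 0] by (simp add: algebra_simps)
    then have "c = 0" by (simp add: power2_less_eq_zero_iff)
    then show ?thesis by (simp add: c_def)
  qed
  have "A *v v - \<mu> *\<^sub>R v \<in> W" using inv[OF vW] vW W(1) by (simp add: subspace_diff subspace_scale)
  from key[OF this] have "A *v v = \<mu> *\<^sub>R v" by simp
  then show ?thesis using vW nv by blast
qed

lemma sym_eigbasis_subspace:
  fixes A :: "real^'n^'n"
  assumes sym: "transpose A = A"
  shows "subspace W \<Longrightarrow> (\<And>x. x \<in> W \<Longrightarrow> A *v x \<in> W) \<Longrightarrow>
    \<exists>B. B \<subseteq> W \<and> pairwise orthogonal B \<and> (\<forall>b\<in>B. norm b = 1 \<and> (\<exists>\<mu>. A *v b = \<mu> *\<^sub>R b)) \<and> W \<subseteq> span B"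
proof (induction "dim W" arbitrary: W rule: less_induct)
  case less
  show ?case
  proof (cases "W = {0}")
    case True
    then show ?thesis by (intro exI[of _ "{}"]) auto
  next
    case False
    obtain v \<mu> where v: "v \<in> W" "norm v = 1" "A *v v = \<mu> *\<^sub>R v"
      using sym_eigvec_exists[OF sym less.prems(1) False less.prems(2)] by blast
    define W' where "W' = W \<inter> {x. v \<bullet> x = 0}"
    have sW': "subspace W'" unfolding W'_def
      using less.prems(1) by (simp add: subspace_inter subspace_hyperplane)
    have invW': "A *v x \<in> W'" if "x \<in> W'" for x
    proof -
      have "v \<bullet> (A *v x) = (A *v v) \<bullet> x" by (rule sym_inner[OF sym])
      also have "\<dots> = \<mu> * (v \<bullet> x)" using v(3) by simp
      finally show ?thesis using that less.prems(2) by (auto simp: W'_def)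
    qed
    have "W' \<subseteq> W" by (auto simp: W'_def)
    moreover have "v \<notin> W'" using v(2) by (auto simp: W'_def norm_eq_1)
    ultimately have "span W' \<subset> span W" using v(1) less.prems(1) sW'
      by (metis span_eq_iff psubsetI)
    then have "dim W' < dim W" by (rule dim_psubset)
    from less.hyps[OF this sW' invW'] obtain B' where B': "B' \<subseteq> W'" "pairwise orthogonal B'"
      "\<forall>b\<in>B'. norm b = 1 \<and> (\<exists>\<mu>. A *v b = \<mu> *\<^sub>R b)" "W' \<subseteq> span B'" by blast
    show ?thesis
    proof (intro exI[of _ "insert v B'"] conjI)
      show "insert v B' \<subseteq> W" using B'(1) v(1) by (auto simp: W'_def)
      show "pairwise orthogonal (insert v B')"
        using B'(1,2) unfolding pairwise_insert
        by (auto simp: W'_def orthogonal_def inner_commute)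
      show "\<forall>b\<in>insert v B'. norm b = 1 \<and> (\<exists>\<mu>. A *v b = \<mu> *\<^sub>R b)" using B'(3) v by auto
      show "W \<subseteq> span (insert v B')"
      proof
        fix x assume x: "x \<in> W"
        have "x - (v \<bullet> x) *\<^sub>R v \<in> W'"
          using x v less.prems(1) by (auto simp: W'_def subspace_diff subspace_scale inner_diff_right norm_eq_1)
        then have "x - (v \<bullet> x) *\<^sub>R v \<in> span (insert v B')"
          using B'(4) span_mono[of B' "insert v B'"] by auto
        moreover have "(v \<bullet> x) *\<^sub>R v \<in> span (insert v B')" by (simp add: span_base span_scale)
        ultimately have "(x - (v \<bullet> x) *\<^sub>R v) + (v \<bullet> x) *\<^sub>R v \<in> span (insert v B')"
          by (rule span_add)
        then show "x \<in> span (insert v B')" by simp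
      qed
    qed
  qed
qed

lemma spectral_theorem:
  fixes A :: "real^'n^'n"
  assumes sym: "transpose A = A"
  shows "\<exists>P d. orthogonal_matrix P \<and> A = P ** diagm d ** transpose P"
proof -
  obtain B where B: "pairwise orthogonal B" "\<forall>b\<in>B. norm b = 1 \<and> (\<exists>\<mu>. A *v b = \<mu> *\<^sub>R b)"
    "UNIV \<subseteq> span B"
    using sym_eigbasis_subspace[OF sym, of UNIV] by auto
  have "0 \<notin> B" using B(2) by auto
  then have indB: "independent B" using B(1) pairwise_orthogonal_independent by blast
  then have finB: "finite B" using independent_imp_finite by blast
  have "card B = dim (UNIV :: (real^'n) set)"
    using basis_card_eq_dim[of B UNIV] indB B(3) by auto
  then have "card B = card (UNIV :: 'n set)" by (simp add: dim_UNIV)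
  then obtain \<beta> where \<beta>: "bij_betw \<beta> (UNIV :: 'n set) B"
    using finite_same_card_bij[OF finite finB] by metis
  have \<beta>B: "\<beta> i \<in> B" for i using \<beta> by (auto simp: bij_betw_def)
  have \<beta>inj: "\<beta> i = \<beta> j \<longleftrightarrow> i = j" for i j using \<beta> by (auto simp: bij_betw_def inj_on_def)
  define d where "d i = (SOME \<mu>. A *v \<beta> i = \<mu> *\<^sub>R \<beta> i)" for i
  have d: "A *v \<beta> i = d i *\<^sub>R \<beta> i" for i
    unfolding d_def using B(2) \<beta>B[of i] by (metis (mono_tags, lifting) someI_ex)
  have on: "\<beta> i \<bullet> \<beta> j = (if i = j then 1 else 0)" for i j
  proof (cases "i = j")
    case True then show ?thesis using B(2) \<beta>B[of i] by (simp add: norm_eq_1)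
  next
    case False
    then have "\<beta> i \<noteq> \<beta> j" using \<beta>inj by blast
    then show ?thesis using B(1) \<beta>B[of i] \<beta>B[of j] False by (auto simp: pairwise_def orthogonal_def)
  qed
  define P :: "real^'n^'n" where "P = (\<chi> r c. \<beta> c $ r)"
  have on': "(\<Sum>k\<in>UNIV. \<beta> i $ k * \<beta> j $ k) = (if i = j then 1 else 0)" for i j
    using on[of i j] by (simp add: inner_vec_def)
  have "transpose P ** P = mat 1"
    unfolding P_def matrix_matrix_mult_def transpose_def mat_def vec_eq_iff
    by (simp add: on')
  then have oP: "orthogonal_matrix P" by (simp add: orthogonal_matrix)
  have "A ** P = P ** diagm d"
  proof -
    have "(A ** P) $ r $ c = (P ** diagm d) $ r $ c" for r c
    proof -
      have "(A ** P) $ r $ c = (A *v \<beta> c) $ r"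
        by (simp add: P_def matrix_matrix_mult_def matrix_vector_mult_def)
      also have "\<dots> = d c * \<beta> c $ r" using d by simp
      also have "\<dots> = (P ** diagm d) $ r $ c"
        by (simp add: P_def matrix_matrix_mult_def diagm_def if_distrib cong: if_cong)
      finally show ?thesis .
    qed
    then show ?thesis by (simp add: vec_eq_iff)
  qed
  then have "A ** P ** transpose P = P ** diagm d ** transpose P" by simp
  then have "A = P ** diagm d ** transpose P"
    using oP by (simp add: orthogonal_matrix_def matrix_mul_assoc[symmetric])
  then show ?thesis using oP by blast
qed

lemma sum_UNIV_plus: "(\<Sum>k\<in>(UNIV :: ('a::finite + 'b::finite) set). f k) = (\<Sum>i\<in>UNIV. f (Inl i)) + (\<Sum>i\<in>UNIV. f (Inr i))"
proof -
  have "(\<Sum>k\<in>(UNIV :: ('a + 'b) set). f k) = sum f (range Inl) + sum f (range Inr)"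
    by (subst UNIV_sum, rule sum.union_disjoint) auto
  also have "\<dots> = (\<Sum>i\<in>UNIV. f (Inl i)) + (\<Sum>i\<in>UNIV. f (Inr i))"
    by (simp add: sum.reindex)
  finally show ?thesis .
qed

lemma prod_UNIV_plus: "(\<Prod>k\<in>(UNIV :: ('a::finite + 'b::finite) set). f k) = (\<Prod>i\<in>UNIV. f (Inl i)) * (\<Prod>i\<in>UNIV. f (Inr i))"
proof -
  have "(\<Prod>k\<in>(UNIV :: ('a + 'b) set). f k) = prod f (range Inl) * prod f (range Inr)"
    by (subst UNIV_sum, rule prod.union_disjoint) auto
  also have "\<dots> = (\<Prod>i\<in>UNIV. f (Inl i)) * (\<Prod>i\<in>UNIV. f (Inr i))"
    by (simp add: prod.reindex)
  finally show ?thesis .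
qed

lemma poly_det: "poly (det M) x = det (\<chi> i j. poly (M $ i $ j) x)"
  by (simp add: det_def poly_sum poly_prod)

lemma poly_charpoly: "poly (charpoly A) x = det (mat x - A)"
proof -
  have "(\<chi> i j. poly ((\<chi> i j. if i = j then [:- (A$i$j), 1:] else [:- (A$i$j):]) $ i $ j) x) = mat x - A"
    by (simp add: vec_eq_iff mat_def)
  then show ?thesis unfolding charpoly_def poly_det by simp
qed

lemma conj_diagm_entry: "(P ** diagm c ** transpose P) $ i $ j = (\<Sum>k\<in>UNIV. P $ i $ k * c k * P $ j $ k)"
  by (simp add: matrix_matrix_mult_def diagm_def transpose_def if_distrib sum.distrib cong: if_cong)

lemma diagm_mult: "(diagm d *v x) $ r = d r * x $ r"
proof -
  have "(diagm d *v x) $ r = (\<Sum>j\<in>UNIV. (if r = j then d r else 0) * x $ j)"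
    by (simp add: diagm_def matrix_vector_mult_def)
  also have "\<dots> = (\<Sum>j\<in>UNIV. if r = j then d r * x $ j else 0)" by (rule sum.cong) auto
  also have "\<dots> = d r * x $ r" by simp
  finally show ?thesis .
qed

lemma charpoly_conj:
  fixes A :: "real^'n^'n"
  assumes oP: "orthogonal_matrix P" and A: "A = P ** diagm d ** transpose P"
  shows "charpoly A = (\<Prod>i\<in>UNIV. [:- d i, 1:])"
proof -
  have PPt: "(\<Sum>k\<in>UNIV. P $ i $ k * P $ j $ k) = (if i = j then 1 else 0)" for i j
  proof -
    have "(P ** transpose P) $ i $ j = (mat 1 :: real^'n^'n) $ i $ j" using oP by (simp add: orthogonal_matrix_def)
    then show ?thesis by (simp add: matrix_matrix_mult_def transpose_def mat_def)
  qed
  have eq: "mat x - A = P ** diagm (\<lambda>i. x - d i) ** transpose P" for x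
  proof -
    have "(mat x - A) $ i $ j = (P ** diagm (\<lambda>i. x - d i) ** transpose P) $ i $ j" for i j
    proof -
      have "(P ** diagm (\<lambda>i. x - d i) ** transpose P) $ i $ j
          = x * (\<Sum>k\<in>UNIV. P $ i $ k * P $ j $ k) - (\<Sum>k\<in>UNIV. P $ i $ k * d k * P $ j $ k)"
        unfolding conj_diagm_entry by (simp add: sum_distrib_left sum_subtractf[symmetric] algebra_simps)
      also have "\<dots> = (mat x - A) $ i $ j"
        by (simp add: PPt A conj_diagm_entry mat_def)
      finally show ?thesis by simp
    qed
    then show ?thesis by (simp add: vec_eq_iff)
  qed
  have dP: "det P * det P = 1"
  proof -
    have "det (P ** transpose P) = 1" using oP by (simp add: orthogonal_matrix_def)
    then show ?thesis by (simp add: det_mul)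
  qed
  have "poly (charpoly A) x = poly (\<Prod>i\<in>UNIV. [:- d i, 1:]) x" for x
  proof -
    have "poly (charpoly A) x = det (P ** diagm (\<lambda>i. x - d i) ** transpose P)"
      by (simp add: poly_charpoly eq)
    also have "\<dots> = det P * det (diagm (\<lambda>i. x - d i)) * det P"
      by (simp add: det_mul)
    also have "det (diagm (\<lambda>i. x - d i)) = (\<Prod>i\<in>UNIV. x - d i)"
      by (subst det_diagonal) (auto simp: diagm_def)
    finally show ?thesis using dP by (simp add: poly_prod algebra_simps)
  qed
  then show ?thesis using poly_eq_poly_eq_iff by blast
qed

lemma sum_singleton_mset: "finite A \<Longrightarrow> (\<Sum>i\<in>A. {# f i #}) = image_mset f (mset_set A)"
  by (induction A rule: finite_induct) auto

lemma eigen_mset_conj: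
  fixes A :: "real^'n^'n"
  assumes oP: "orthogonal_matrix P" and A: "A = P ** diagm d ** transpose P"
  shows "eigen_mset A = image_mset d (mset_set UNIV)"
proof -
  have "eigen_mset A = (\<Sum>i\<in>UNIV. proots [:- d i, 1:])"
    unfolding eigen_mset_def charpoly_conj[OF assms] by (rule proots_prod) auto
  also have "\<dots> = (\<Sum>i\<in>UNIV. {# d i #})" by simp
  also have "\<dots> = image_mset d (mset_set UNIV)"
    by (rule sum_singleton_mset) simp
  finally show ?thesis .
qed

lemma psd_eig_nonneg:
  fixes A :: "real^'n^'n"
  assumes psd: "psd_matrix A" and oP: "orthogonal_matrix P" and A: "A = P ** diagm d ** transpose P"
  shows "d i \<ge> 0"
proof -
  define e :: "real^'n" where "e = axis i 1"
  define y where "y = P *v e"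
  have PtP: "transpose P ** P = mat 1" using oP by (simp add: orthogonal_matrix_def)
  have 1: "transpose P *v (P *v e) = e" by (simp only: matrix_vector_mul_assoc PtP matrix_vector_mul_lid)
  have "A *v y = P *v (diagm d *v (transpose P *v (P *v e)))" by (simp only: A y_def matrix_vector_mul_assoc matrix_mul_assoc)
  then have Ay: "A *v y = P *v (diagm d *v e)" by (simp only: 1)
  have "y \<bullet> (A *v y) = (y v* P) \<bullet> (diagm d *v e)" by (simp only: Ay dot_lmul_matrix)
  moreover have "y v* P = e" using 1 by (simp add: y_def)
  moreover have "e \<bullet> (diagm d *v e) = d i"
  proof -
    have "diagm d *v e = d i *\<^sub>R e" by (simp add: vec_eq_iff diagm_mult e_def axis_def)
    then show ?thesis by (simp add: e_def inner_axis_axis)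
  qed
  ultimately have "y \<bullet> (A *v y) = d i" by simp
  then show ?thesis using psd by (metis psd_matrix_def)
qed

lemma block_diag_mult: "block_diag A B ** block_diag C D = block_diag (A ** C) (B ** D)"
  by (simp add: vec_eq_iff block_diag_def matrix_matrix_mult_def sum_UNIV_plus split: sum.splits)

lemma block_diag_transpose: "transpose (block_diag A B) = block_diag (transpose A) (transpose B)"
  by (simp add: vec_eq_iff block_diag_def transpose_def split: sum.splits)

lemma block_diag_mat1: "block_diag (mat 1) (mat 1) = mat 1"
  by (simp add: vec_eq_iff block_diag_def mat_def split: sum.splits)

lemma block_diag_diagm: "block_diag (diagm d1) (diagm d2) = diagm (case_sum d1 d2)"
  by (simp add: vec_eq_iff block_diag_def diagm_def split: sum.splits)

lemma block_diag_orth: "orthogonal_matrix P1 \<Longrightarrow> orthogonal_matrix P2 \<Longrightarrow> orthogonal_matrix (block_diag P1 P2)"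
  by (simp add: orthogonal_matrix block_diag_transpose block_diag_mult block_diag_mat1)

lemma psd_sym: "psd_matrix A \<Longrightarrow> transpose A = A" by (simp add: psd_matrix_def)

lemma eigen_block:
  fixes Q R :: "real^'n^'n"
  assumes "psd_matrix Q" "psd_matrix R"
  obtains P1 d1 P2 d2 where "orthogonal_matrix P1" "Q = P1 ** diagm d1 ** transpose P1"
    "orthogonal_matrix P2" "R = P2 ** diagm d2 ** transpose P2"
    "\<And>i. d1 i \<ge> 0" "\<And>i. d2 i \<ge> 0"
    "eigen_mset (block_diag Q R) = image_mset (case_sum d1 d2) (mset_set UNIV)"
proof -
  obtain P1 d1 where 1: "orthogonal_matrix P1" "Q = P1 ** diagm d1 ** transpose P1"
    using spectral_theorem[OF psd_sym[OF assms(1)]] by blast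
  obtain P2 d2 where 2: "orthogonal_matrix P2" "R = P2 ** diagm d2 ** transpose P2"
    using spectral_theorem[OF psd_sym[OF assms(2)]] by blast
  have "block_diag Q R = block_diag P1 P2 ** diagm (case_sum d1 d2) ** transpose (block_diag P1 P2)"
    by (simp add: 1(2) 2(2) block_diag_transpose block_diag_mult block_diag_diagm[symmetric])
  then have "eigen_mset (block_diag Q R) = image_mset (case_sum d1 d2) (mset_set UNIV)"
    by (rule eigen_mset_conj[OF block_diag_orth[OF 1(1) 2(1)]])
  then show ?thesis using that 1 2 psd_eig_nonneg[OF assms(1) 1] psd_eig_nonneg[OF assms(2) 2] by blast
qed

lemma prod_list_nth: "prod_list (map f xs) = (\<Prod>i<length xs. f (xs ! i))"
  by (induction xs) (simp_all add: prod.lessThan_Suc_shift del: prod.lessThan_Suc)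

lemma prod_sub_list:
  fixes f g :: "real \<Rightarrow> real"
  assumes S: "S \<subseteq> {1..length xs}" and fg: "\<And>y. y \<in> set xs \<Longrightarrow> 0 \<le> g y \<and> g y \<le> f y \<and> 1 \<le> f y"
  shows "(\<Prod>l\<in>S. g (xs ! (l - 1))) \<le> prod_list (map f xs)"
proof -
  define S' where "S' = (\<lambda>l. l - 1) ` S"
  have inj: "inj_on (\<lambda>l. l - 1) S"
  proof (rule inj_onI)
    fix x y assume "x \<in> S" "y \<in> S" "x - 1 = y - 1"
    moreover have "x \<ge> 1" "y \<ge> 1" using S \<open>x \<in> S\<close> \<open>y \<in> S\<close> by auto
    ultimately show "x = y" by simp
  qed
  have S'sub: "S' \<subseteq> {..<length xs}" using S by (auto simp: S'_def subset_iff)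
  have "(\<Prod>l\<in>S. g (xs ! (l - 1))) = (\<Prod>i\<in>S'. g (xs ! i))"
    using prod.reindex[OF inj, of "\<lambda>i. g (xs ! i)"] by (simp add: S'_def comp_def)
  also have "\<dots> \<le> (\<Prod>i\<in>S'. f (xs ! i))"
    using S'sub fg by (intro prod_mono) (auto intro!: nth_mem)
  also have "\<dots> \<le> (\<Prod>i<length xs. f (xs ! i))"
  proof (intro prod_mono2)
    have f1: "1 \<le> f (xs ! i)" if "i < length xs" for i using fg[OF nth_mem[OF that]] by simp
    show "1 \<le> f (xs ! b)" if "b \<in> {..<length xs} - S'" for b using that f1 by auto
    show "0 \<le> f (xs ! a)" if "a \<in> S'" for a using that S'sub f1[of a] by auto
  qed (use S'sub in auto)
  finally show ?thesis by (simp add: prod_list_nth)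
qed

lemma eig_desc_bound:
  fixes A :: "real^'m^'m" and dd :: "'m \<Rightarrow> real" and f g :: "real \<Rightarrow> real"
  assumes E: "eigen_mset A = image_mset dd (mset_set UNIV)"
    and S: "S \<subseteq> {1..CARD('m)}"
    and fg: "\<And>y. 0 \<le> g y \<and> g y \<le> f y \<and> 1 \<le> f y"
  shows "(\<Prod>l\<in>S. g (eig_desc A l)) \<le> (\<Prod>k\<in>UNIV. f (dd k))"
proof -
  define xs where "xs = rev (sorted_list_of_multiset (eigen_mset A))"
  have mxs: "mset xs = image_mset dd (mset_set UNIV)" by (simp add: xs_def E)
  have "length xs = size (mset xs)" by simp
  then have len: "length xs = CARD('m)" by (simp add: mxs)
  have "(\<Prod>l\<in>S. g (eig_desc A l)) = (\<Prod>l\<in>S. g (xs ! (l - 1)))" by (simp add: eig_desc_def xs_def)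
  also have "\<dots> \<le> prod_list (map f xs)" by (rule prod_sub_list) (use S len fg in auto)
  also have "prod_list (map f xs) = prod_mset (image_mset f (mset xs))"
    by (metis mset_map prod_mset_prod_list)
  also have "\<dots> = (\<Prod>k\<in>UNIV. f (dd k))" by (simp add: mxs prod_unfold_prod_mset image_mset.compositionality comp_def)
  finally show ?thesis .
qed

definition gdens :: "real^'m::finite \<Rightarrow> real" where
  "gdens z = (\<Prod>k\<in>UNIV. std_normal_density (z $ k))"

definition gauss :: "(real^'m::finite) measure" where
  "gauss = density lborel (\<lambda>z. ennreal (gdens z))"

lemma continuous_vec_nth: "continuous_on UNIV (\<lambda>z::real^'m. z $ k)"
  by (intro linear_continuous_on bounded_linear_vec_nth bounded_linear_ident)

lemma borel_vec_nth[measurable]: "(\<lambda>z::real^'m. z $ k) \<in> borel_measurable borel"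
  by (rule borel_measurable_continuous_onI[OF continuous_vec_nth])

lemma gdens_measurable[measurable]: "gdens \<in> borel_measurable borel"
  unfolding gdens_def by measurable

lemma gdens_nonneg: "gdens z \<ge> 0" by (simp add: gdens_def prod_nonneg)

lemma norm_sq_vec: "(norm (z::real^'m))^2 = (\<Sum>k\<in>UNIV. (z $ k)^2)"
  by (simp add: norm_vec_def L2_set_def sum_nonneg)

lemma gdens_eq:
  fixes z :: "real^'m"
  shows "gdens z = (1 / sqrt (2 * pi)) ^ CARD('m) * exp (- (norm z ^ 2) / 2)"
proof -
  have "gdens z = (\<Prod>k\<in>UNIV. (1 / sqrt (2 * pi)) * exp (- ((z $ k)^2) / 2))"
    by (simp add: gdens_def normal_density_def)
  also have "\<dots> = (\<Prod>k::'m\<in>UNIV. 1 / sqrt (2 * pi)) * (\<Prod>k\<in>UNIV. exp (- ((z $ k)^2) / 2))"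
    by (rule prod.distrib)
  also have "(\<Prod>k::'m\<in>UNIV. 1 / sqrt (2 * pi)) = (1 / sqrt (2 * pi)) ^ CARD('m)"
    by simp
  also have "(\<Prod>k\<in>UNIV. exp (- ((z $ k)^2) / 2)) = exp (\<Sum>k\<in>UNIV. - ((z $ k)^2) / 2)"
    by (simp add: exp_sum)
  also have "(\<Sum>k\<in>UNIV. - ((z $ k)^2) / 2) = - (norm z ^ 2) / 2"
    by (simp add: norm_sq_vec sum_negf sum_divide_distrib)
  finally show ?thesis .
qed

lemma gauss1:
  assumes a: "a \<ge> 0"
  shows "(\<integral>\<^sup>+t. ennreal (std_normal_density t) * ennreal (exp (- a * t^2)) \<partial>lborel) = ennreal ((1 + 2 * a) powr (-1/2))"
proof -
  define \<sigma> where "\<sigma> = 1 / sqrt (1 + 2 * a)"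
  have s: "\<sigma> > 0" using a by (simp add: \<sigma>_def)
  have s2: "\<sigma>^2 = 1 / (1 + 2 * a)" using a by (simp add: \<sigma>_def power_divide)
  have eq: "std_normal_density t * exp (- a * t^2) = normal_density 0 \<sigma> t * (1 / sqrt (1 + 2 * a))" for t
  proof -
    have e: "exp (- (t^2) / 2) * exp (- a * t^2) = exp (- ((1 + 2 * a) * t^2) / 2)"
    proof -
      have "- (t^2) / 2 + (- a * t^2) = - ((1 + 2 * a) * t^2) / 2" by (simp add: field_simps)
      then show ?thesis by (metis exp_add)
    qed
    have "std_normal_density t * exp (- a * t^2) = 1 / sqrt (2 * pi) * (exp (- (t^2) / 2) * exp (- a * t^2))"
      by (simp add: normal_density_def)
    then have A: "std_normal_density t * exp (- a * t^2) = 1 / sqrt (2 * pi) * exp (- ((1 + 2 * a) * t^2) / 2)"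
      by (simp only: e)
    have B: "normal_density 0 \<sigma> t = sqrt (1 + 2 * a) / sqrt (2 * pi) * exp (- ((1 + 2 * a) * t^2) / 2)"
      using a by (simp add: normal_density_def s2 real_sqrt_divide real_sqrt_mult field_simps)
    have sp: "sqrt (1 + 2 * a) > 0" "sqrt (2 * pi) > 0" using a by auto
    define E where "E = exp (- ((1 + 2 * a) * t^2) / 2)"
    have C: "sqrt (1 + 2 * a) / sqrt (2 * pi) * E * (1 / sqrt (1 + 2 * a)) = 1 / sqrt (2 * pi) * E"
      using sp by (simp add: field_simps)
    show ?thesis unfolding A B using C by (simp only: E_def)
  qed
  have "(\<integral>\<^sup>+t. ennreal (std_normal_density t) * ennreal (exp (- a * t^2)) \<partial>lborel)
      = (\<integral>\<^sup>+t. ennreal (normal_density 0 \<sigma> t) * ennreal (1 / sqrt (1 + 2 * a)) \<partial>lborel)"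
  proof (intro nn_integral_cong)
    fix t
    have "ennreal (std_normal_density t) * ennreal (exp (- a * t^2)) = ennreal (std_normal_density t * exp (- a * t^2))"
      by (rule ennreal_mult[symmetric]) auto
    also have "\<dots> = ennreal (normal_density 0 \<sigma> t * (1 / sqrt (1 + 2 * a)))" by (simp only: eq)
    also have "\<dots> = ennreal (normal_density 0 \<sigma> t) * ennreal (1 / sqrt (1 + 2 * a))"
      by (rule ennreal_mult) (use a in auto)
    finally show "ennreal (std_normal_density t) * ennreal (exp (- a * t^2)) = ennreal (normal_density 0 \<sigma> t) * ennreal (1 / sqrt (1 + 2 * a))" .
  qed
  also have "\<dots> = (\<integral>\<^sup>+t. ennreal (normal_density 0 \<sigma> t) \<partial>lborel) * ennreal (1 / sqrt (1 + 2 * a))"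
    by (rule nn_integral_multc) measurable
  also have "(\<integral>\<^sup>+t. ennreal (normal_density 0 \<sigma> t) \<partial>lborel) = 1"
  proof -
    have "(\<integral>\<^sup>+t. ennreal (normal_density 0 \<sigma> t) \<partial>lborel) = ennreal (\<integral>t. normal_density 0 \<sigma> t \<partial>lborel)"
      by (rule nn_integral_eq_integral) (auto simp: integrable_normal_density[OF s])
    then show ?thesis using integral_normal_density[OF s] by simp
  qed
  also have "1 / sqrt (1 + 2 * a) = (1 + 2 * a) powr (-1/2)"
    using a by (simp add: powr_minus_divide powr_half_sqrt)
  finally show ?thesis by simp
qed

lemma Basis_vec_real: "(Basis :: (real^'m) set) = range (\<lambda>k. axis k 1)"
  by (auto simp: Basis_vec_def)

lemma sum_Basis_vec_nth: "(\<Sum>b\<in>(Basis :: (real^'m) set). f b *\<^sub>R b) $ k = f (axis k 1)"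
proof -
  have inj: "inj (\<lambda>k::'m. axis k (1::real))" by (auto simp: inj_def axis_eq_axis)
  have "(\<Sum>b\<in>(Basis :: (real^'m) set). f b *\<^sub>R b) = (\<Sum>i\<in>UNIV. f (axis i 1) *\<^sub>R (axis i 1 :: real^'m))"
    unfolding Basis_vec_real by (simp add: sum.reindex[OF inj])
  then show ?thesis by (simp add: axis_def if_distrib sum.delta cong: if_cong)
qed

lemma gauss_prod:
  fixes h :: "'m::finite \<Rightarrow> real \<Rightarrow> real"
  assumes hm[measurable]: "\<And>k. h k \<in> borel_measurable borel" and hn: "\<And>k t. h k t \<ge> 0"
  shows "(\<integral>\<^sup>+z. ennreal (\<Prod>k\<in>UNIV. h k (z $ k)) \<partial>(gauss :: (real^'m) measure))
       = (\<Prod>k\<in>UNIV. \<integral>\<^sup>+t. ennreal (std_normal_density t * h k t) \<partial>lborel)"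
proof -
  define F where "F k t = std_normal_density t * h k t" for k t
  have Fm[measurable]: "F k \<in> borel_measurable borel" for k unfolding F_def by measurable
  have Fn: "F k t \<ge> 0" for k t unfolding F_def using hn by simp
  have inj: "inj (\<lambda>k::'m. axis k (1::real))" by (auto simp: inj_def axis_eq_axis)
  define kof where "kof = inv (\<lambda>k::'m. axis k (1::real))"
  have kof: "kof (axis k 1) = k" for k unfolding kof_def by (rule inv_f_f[OF inj])
  have "(\<integral>\<^sup>+z. ennreal (\<Prod>k\<in>UNIV. h k (z $ k)) \<partial>(gauss :: (real^'m) measure))
      = (\<integral>\<^sup>+z. ennreal (gdens z) * ennreal (\<Prod>k\<in>UNIV. h k (z $ k)) \<partial>lborel)"
    unfolding gauss_def by (rule nn_integral_density) measurable
  also have "\<dots> = (\<integral>\<^sup>+z. ennreal (\<Prod>b\<in>Basis. F (kof b) (z \<bullet> b)) \<partial>lborel)"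
    by (intro nn_integral_cong)
       (simp add: gdens_def F_def prod.distrib ennreal_mult'[symmetric] prod_nonneg hn Basis_vec_real prod.reindex[OF inj] kof inner_axis)
  also have "\<dots> = (\<integral>\<^sup>+z. (\<Prod>b\<in>Basis. ennreal (F (kof b) (z \<bullet> b))) \<partial>lborel)"
    by (intro nn_integral_cong) (simp add: prod_ennreal Fn)
  also have "\<dots> = (\<Prod>b\<in>Basis. (\<integral>\<^sup>+x. F (kof b) x \<partial>lborel))"
    by (rule nn_integral_lborel_prod) (auto simp: Fn)
  also have "\<dots> = (\<Prod>k\<in>UNIV. (\<integral>\<^sup>+x. F k x \<partial>lborel))"
    by (simp add: Basis_vec_real prod.reindex[OF inj] kof)
  finally show ?thesis by (simp add: F_def)
qed

lemma gauss_quad: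
  fixes a :: "'m::finite \<Rightarrow> real"
  assumes a: "\<And>k. a k \<ge> 0"
  shows "(\<integral>\<^sup>+z. ennreal (exp (- (\<Sum>k\<in>UNIV. a k * (z $ k)^2))) \<partial>(gauss :: (real^'m) measure))
       = ennreal (\<Prod>k\<in>UNIV. (1 + 2 * a k) powr (-1/2))"
proof -
  have "(\<integral>\<^sup>+z. ennreal (exp (- (\<Sum>k\<in>UNIV. a k * (z $ k)^2))) \<partial>(gauss :: (real^'m) measure))
      = (\<integral>\<^sup>+z. (\<Prod>k\<in>UNIV. ennreal (exp (- a k * (z $ k)^2))) \<partial>(gauss :: (real^'m) measure))"
    by (intro nn_integral_cong) (simp add: prod_ennreal exp_sum[symmetric] sum_negf)
  also have "\<dots> = (\<integral>\<^sup>+z. ennreal (\<Prod>k\<in>UNIV. exp (- a k * (z $ k)^2)) \<partial>(gauss :: (real^'m) measure))"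
    by (intro nn_integral_cong) (simp add: prod_ennreal)
  also have "\<dots> = (\<Prod>k\<in>UNIV. \<integral>\<^sup>+t. ennreal (std_normal_density t * exp (- a k * t^2)) \<partial>lborel)"
    by (rule gauss_prod) auto
  also have "\<dots> = (\<Prod>k\<in>UNIV. \<integral>\<^sup>+t. ennreal (std_normal_density t) * ennreal (exp (- a k * t^2)) \<partial>lborel)"
    by (simp add: ennreal_mult')
  also have "\<dots> = (\<Prod>k\<in>UNIV. ennreal ((1 + 2 * a k) powr (-1/2)))"
    using gauss1[OF a] by presburger
  finally show ?thesis by (simp add: prod_ennreal)
qed

lemma lborel_orth_inv:
  fixes T :: "real^'m::{finite,wellorder} \<Rightarrow> real^'m::_"
  assumes T: "orthogonal_transformation T"
  shows "distr lborel borel T = lborel"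
proof -
  have lin: "linear T" using T by (rule orthogonal_transformation_linear)
  have Tm[measurable]: "T \<in> borel_measurable borel"
    by (rule borel_measurable_continuous_onI, rule linear_continuous_on)
       (use lin in \<open>simp add: linear_conv_bounded_linear\<close>)
  have bij: "bij T" using T by (rule orthogonal_transformation_bij)
  have oi: "orthogonal_transformation (inv T)" by (rule orthogonal_transformation_inv[OF T])
  have "lborel = distr lborel borel T"
  proof (rule lborel_eqI)
    fix l u :: "(real, 'm) vec" assume le: "\<And>b. b \<in> Basis \<Longrightarrow> l \<bullet> b \<le> u \<bullet> b"
    let ?B = "box l u"
    have pre: "T -` ?B = inv T ` ?B" using bij by (rule bij_vimage_eq_inv_image)
    have Bs: "T -` ?B \<in> sets borel" by (rule measurable_sets_borel[OF Tm]) simp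
    have bl: "bounded_linear (inv T)" using orthogonal_transformation_linear[OF oi] linear_conv_bounded_linear by blast
    have bnd: "bounded (T -` ?B)" unfolding pre by (rule bounded_linear_image[OF bounded_box bl])
    have "emeasure (distr lborel borel T) ?B = emeasure lborel (T -` ?B)"
      by (simp add: emeasure_distr)
    also have "\<dots> = ennreal (measure lborel (T -` ?B))"
      using emeasure_bounded_finite[OF bnd] by (simp add: emeasure_eq_ennreal_measure)
    also have "measure lborel (T -` ?B) = measure lebesgue (T -` ?B)"
      using Bs by simp
    also have "\<dots> = measure lebesgue ?B"
      unfolding pre by (rule measure_orthogonal_image[OF oi lmeasurable_box])
    also have "\<dots> = measure lborel ?B" by simp
    also have "ennreal (measure lborel ?B) = emeasure lborel ?B"
      using emeasure_lborel_box_finite[of l u] by (simp add: emeasure_eq_ennreal_measure)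
    also have "\<dots> = (\<Prod>b\<in>Basis. (u - l) \<bullet> b)"
      using le by (simp add: emeasure_lborel_box_eq)
    finally show "emeasure (distr lborel borel T) ?B = (\<Prod>b\<in>Basis. (u - l) \<bullet> b)" .
  qed simp
  then show ?thesis by simp
qed

lemma gauss_orth_inv:
  fixes T :: "real^'m::{finite,wellorder} \<Rightarrow> real^'m::_" and g :: "real^'m::_ \<Rightarrow> ennreal"
  assumes T: "orthogonal_transformation T" and g[measurable]: "g \<in> borel_measurable borel"
  shows "(\<integral>\<^sup>+z. g (T z) \<partial>gauss) = (\<integral>\<^sup>+z. g z \<partial>gauss)"
proof -
  have lin: "linear T" using T by (rule orthogonal_transformation_linear)
  have Tm[measurable]: "T \<in> borel_measurable borel"
    by (rule borel_measurable_continuous_onI, rule linear_continuous_on)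
       (use lin in \<open>simp add: linear_conv_bounded_linear\<close>)
  have gd: "gdens (T z) = gdens z" for z
    by (simp add: gdens_eq orthogonal_transformation_norm[OF T])
  have "(\<integral>\<^sup>+z. g (T z) \<partial>gauss) = (\<integral>\<^sup>+z. ennreal (gdens z) * g (T z) \<partial>lborel)"
    unfolding gauss_def by (rule nn_integral_density) measurable
  also have "\<dots> = (\<integral>\<^sup>+z. ennreal (gdens (T z)) * g (T z) \<partial>lborel)"
    by (simp add: gd)
  also have "\<dots> = (\<integral>\<^sup>+y. ennreal (gdens y) * g y \<partial>(distr lborel borel T))"
    by (rule nn_integral_distr[symmetric]) measurable
  also have "\<dots> = (\<integral>\<^sup>+y. ennreal (gdens y) * g y \<partial>lborel)"
    by (simp add: lborel_orth_inv[OF T])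
  also have "\<dots> = (\<integral>\<^sup>+z. g z \<partial>gauss)"
    unfolding gauss_def by (rule nn_integral_density[symmetric]) measurable
  finally show ?thesis .
qed

definition iota :: "'n::finite \<Rightarrow> 'n bit0" where "iota = (SOME f. inj f)"

lemma inj_iota: "inj (iota :: 'n::finite \<Rightarrow> 'n bit0)"
proof -
  have "CARD('n) \<le> CARD('n bit0)" by simp
  then obtain f :: "'n \<Rightarrow> 'n bit0" where "inj f"
    using card_le_inj[of "UNIV :: 'n set" "UNIV :: 'n bit0 set"] by auto
  then show ?thesis unfolding iota_def by (rule someI[where P=inj])
qed

definition proj :: "real^('n::finite bit0) \<Rightarrow> real^'n" where "proj z = (\<chi> i. z $ iota i)"

lemma proj_nth[simp]: "proj z $ i = z $ iota i" by (simp add: proj_def)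

lemma proj_measurable[measurable]: "proj \<in> borel_measurable borel"
proof -
  have "continuous_on UNIV (proj :: real^('n::finite bit0) \<Rightarrow> real^'n)"
    unfolding proj_def by (intro continuous_on_vec_lambda continuous_vec_nth)
  then show ?thesis by (rule borel_measurable_continuous_onI)
qed

lemma sum_split_iota: "(\<Sum>k\<in>(UNIV :: 'n::finite bit0 set). g k) = (\<Sum>i\<in>UNIV. g (iota i)) + (\<Sum>k\<in>UNIV - range iota. g k)"
proof -
  have "(\<Sum>k\<in>(UNIV :: 'n::finite bit0 set). g k) = (\<Sum>k\<in>UNIV - range iota. g k) + (\<Sum>k\<in>range iota. g k)"
    by (rule sum.subset_diff) auto
  also have "(\<Sum>k\<in>range iota. g k) = (\<Sum>i\<in>UNIV. g (iota i))"
    by (simp add: sum.reindex[OF inj_iota])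
  finally show ?thesis by (simp add: add.commute)
qed

lemma prod_split_iota: "(\<Prod>k\<in>(UNIV :: 'n::finite bit0 set). g k) = (\<Prod>i\<in>UNIV. g (iota i)) * (\<Prod>k\<in>UNIV - range iota. g k)"
proof -
  have "(\<Prod>k\<in>(UNIV :: 'n::finite bit0 set). g k) = (\<Prod>k\<in>UNIV - range iota. g k) * (\<Prod>k\<in>range iota. g k)"
    by (rule prod.subset_diff) auto
  also have "(\<Prod>k\<in>range iota. g k) = (\<Prod>i\<in>UNIV. g (iota i))"
    by (simp add: prod.reindex[OF inj_iota])
  finally show ?thesis by (simp add: mult.commute)
qed

lemma gauss_orth_inv_n:
  fixes Om :: "real^'n::finite^'n" and f :: "real^'n \<Rightarrow> ennreal"
  assumes Om: "orthogonal_matrix Om" and f[measurable]: "f \<in> borel_measurable borel"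
  shows "(\<integral>\<^sup>+z. f (Om *v proj z) \<partial>(gauss :: (real^('n bit0)) measure)) = (\<integral>\<^sup>+z. f (proj z) \<partial>gauss)"
proof -
  have oO: "orthogonal_transformation (\<lambda>x. Om *v x)"
    using Om by (simp add: orthogonal_transformation_matrix matrix_of_matrix_vector_mul)
  have Oinner: "(Om *v x) \<bullet> (Om *v y) = x \<bullet> y" for x y
    using oO by (simp add: orthogonal_transformation_def)
  define T :: "real^('n bit0) \<Rightarrow> real^('n bit0)" where
    "T z = (\<chi> k. if k \<in> range iota then (Om *v proj z) $ (inv iota k) else z $ k)" for z
  have Tiota: "T z $ iota i = (Om *v proj z) $ i" for z i
    by (simp add: T_def inv_f_f[OF inj_iota])
  have Tout: "k \<notin> range iota \<Longrightarrow> T z $ k = z $ k" for z k by (simp add: T_def)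
  have projT: "proj (T z) = Om *v proj z" for z by (simp add: vec_eq_iff Tiota)
  have projadd: "proj (x + y) = proj x + proj y" for x y by (simp add: vec_eq_iff)
  have projscale: "proj (c *\<^sub>R x) = c *\<^sub>R proj x" for c x by (simp add: vec_eq_iff)
  have lin: "linear T"
  proof (rule linearI)
    fix x y :: "real^('n bit0)"
    show "T (x + y) = T x + T y"
      by (simp add: T_def vec_eq_iff projadd matrix_vector_right_distrib)
  next
    fix c :: real and x :: "real^('n bit0)"
    show "T (c *\<^sub>R x) = c *\<^sub>R T x"
      by (simp add: T_def vec_eq_iff projscale matrix_vector_mult_scaleR)
  qed
  have inner_split: "x \<bullet> y = proj x \<bullet> proj y + (\<Sum>k\<in>UNIV - range iota. x $ k * y $ k)" for x y :: "real^('n bit0)"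
    unfolding inner_vec_def by (subst sum_split_iota) simp
  have "T v \<bullet> T w = v \<bullet> w" for v w
  proof -
    have "T v \<bullet> T w = proj (T v) \<bullet> proj (T w) + (\<Sum>k\<in>UNIV - range iota. T v $ k * T w $ k)"
      by (rule inner_split)
    also have "(\<Sum>k\<in>UNIV - range iota. T v $ k * T w $ k) = (\<Sum>k\<in>UNIV - range iota. v $ k * w $ k)"
      by (rule sum.cong) (auto simp: Tout)
    also have "proj (T v) \<bullet> proj (T w) = proj v \<bullet> proj w" by (simp add: projT Oinner)
    finally show ?thesis by (simp add: inner_split[of v w])
  qed
  then have oT: "orthogonal_transformation T" using lin by (simp add: orthogonal_transformation_def)
  have "(\<integral>\<^sup>+z. f (Om *v proj z) \<partial>(gauss :: (real^('n bit0)) measure)) = (\<integral>\<^sup>+z. (f \<circ> proj) (T z) \<partial>gauss)"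
    by (simp add: projT)
  also have "\<dots> = (\<integral>\<^sup>+z. (f \<circ> proj) z \<partial>gauss)"
    by (rule gauss_orth_inv[OF oT]) measurable
  finally show ?thesis by simp
qed

lemma gauss_quad_n:
  fixes a :: "'n::finite \<Rightarrow> real"
  assumes a: "\<And>i. a i \<ge> 0"
  shows "(\<integral>\<^sup>+z. ennreal (exp (- (\<Sum>i\<in>UNIV. a i * (proj z $ i)^2))) \<partial>(gauss :: (real^('n bit0)) measure))
       = ennreal (\<Prod>i\<in>UNIV. (1 + 2 * a i) powr (-1/2))"
proof -
  define a' where "a' k = (if k \<in> range iota then a (inv iota k) else 0)" for k :: "'n bit0"
  have a'iota: "a' (iota i) = a i" for i by (simp add: a'_def inv_f_f[OF inj_iota])
  have a'out: "k \<in> UNIV - range iota \<Longrightarrow> a' k = 0" for k by (simp add: a'_def)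
  have a'nn: "a' k \<ge> 0" for k using a by (simp add: a'_def)
  have "(\<Sum>k\<in>UNIV. a' k * (z $ k)^2) = (\<Sum>i\<in>UNIV. a i * (proj z $ i)^2)" for z :: "real^('n bit0)"
    by (simp add: sum_split_iota a'iota a'out)
  then have "(\<integral>\<^sup>+z. ennreal (exp (- (\<Sum>i\<in>UNIV. a i * (proj z $ i)^2))) \<partial>(gauss :: (real^('n bit0)) measure))
      = (\<integral>\<^sup>+z. ennreal (exp (- (\<Sum>k\<in>UNIV. a' k * (z $ k)^2))) \<partial>(gauss :: (real^('n bit0)) measure))"
    by simp
  also have "\<dots> = ennreal (\<Prod>k\<in>UNIV. (1 + 2 * a' k) powr (-1/2))"
    by (rule gauss_quad[OF a'nn])
  also have "(\<Prod>k\<in>UNIV. (1 + 2 * a' k) powr (-1/2)) = (\<Prod>i\<in>UNIV. (1 + 2 * a i) powr (-1/2))"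
    by (simp add: prod_split_iota a'iota a'out)
  finally show ?thesis .
qed

lemma continuous_on_mm[continuous_intros]:
  fixes f :: "'a::topological_space \<Rightarrow> real^'m^'n" and g :: "'a \<Rightarrow> real^'k^'m"
  shows "continuous_on S f \<Longrightarrow> continuous_on S g \<Longrightarrow> continuous_on S (\<lambda>x. f x ** g x)"
  unfolding matrix_matrix_mult_def by (intro continuous_intros)

lemma continuous_on_mv[continuous_intros]:
  fixes f :: "'a::topological_space \<Rightarrow> real^'m^'n" and g :: "'a \<Rightarrow> real^'m"
  shows "continuous_on S f \<Longrightarrow> continuous_on S g \<Longrightarrow> continuous_on S (\<lambda>x. f x *v g x)"
  unfolding matrix_vector_mult_def by (intro continuous_intros)

lemma continuous_on_transpose[continuous_intros]:
  fixes f :: "'a::topological_space \<Rightarrow> real^'m^'n"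
  shows "continuous_on S f \<Longrightarrow> continuous_on S (\<lambda>x. transpose (f x))"
  unfolding transpose_def by (intro continuous_intros)

lemma cont_meas:
  assumes "continuous_on UNIV f" "sets M = sets borel"
  shows "f \<in> borel_measurable M"
  using borel_measurable_continuous_onI[OF assms(1)] measurable_cong_sets[OF assms(2) refl] by blast

lemma sets_pair_borel:
  assumes "sets M1 = sets (borel :: 'a::second_countable_topology measure)" "sets M2 = sets (borel :: 'b::second_countable_topology measure)"
  shows "sets (M1 \<Otimes>\<^sub>M M2) = sets (borel :: ('a \<times> 'b) measure)"
  by (metis sets_pair_measure_cong[OF assms] borel_prod)

lemma sets_gauss: "sets gauss = sets borel" by (simp add: gauss_def)

lemma prob_gauss: "prob_space (gauss :: (real^'m::finite) measure)"
proof -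
  have "(\<integral>\<^sup>+z. ennreal (exp (- (\<Sum>k\<in>UNIV. 0 * (z $ k)^2))) \<partial>(gauss :: (real^'m) measure))
      = ennreal (\<Prod>k\<in>(UNIV::'m set). (1 + 2 * 0) powr (-1/2))"
    by (rule gauss_quad) simp
  then have "emeasure gauss (space (gauss :: (real^'m) measure)) = 1"
    by simp
  then show ?thesis by (rule prob_spaceI)
qed

locale haar =
  fixes H :: "(real^'n::finite^'n) measure"
  assumes haar: "haar_orthogonal H"
begin

lemma prob: "prob_space H" using haar by (simp add: haar_orthogonal_def)
lemma setsH: "sets H = sets borel" using haar by (simp add: haar_orthogonal_def)
lemma spaceH: "space H = UNIV" using sets_eq_imp_space_eq[OF setsH] by simp

lemma orth_closed: "closed {A :: real^'n^'n. orthogonal_matrix A}"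
proof -
  have "{A :: real^'n^'n. orthogonal_matrix A} = {A. transpose A ** A = mat 1}"
    by (simp add: orthogonal_matrix)
  also have "closed \<dots>" by (intro closed_Collect_eq continuous_intros)
  finally show ?thesis .
qed

lemma AE_orth: "AE U in H. orthogonal_matrix U"
proof -
  have s: "{A. orthogonal_matrix A} \<in> sets H" unfolding setsH using orth_closed by (simp add: borel_closed)
  have "emeasure H {A. orthogonal_matrix A} = 1" using haar by (simp add: haar_orthogonal_def)
  then have "measure H {A. orthogonal_matrix A} = 1" by (simp add: measure_def)
  then show ?thesis using prob_space.AE_in_set_eq_1[OF prob s] by simp
qed

lemma left_inv:
  fixes f :: "real^'n^'n \<Rightarrow> ennreal"
  assumes P: "orthogonal_matrix P" and f[measurable]: "f \<in> borel_measurable borel"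
  shows "(\<integral>\<^sup>+U. f (P ** U) \<partial>H) = (\<integral>\<^sup>+U. f U \<partial>H)"
proof -
  have m: "(\<lambda>A. P ** A) \<in> H \<rightarrow>\<^sub>M borel" by (rule cont_meas[OF _ setsH]) (intro continuous_intros)
  have "(\<integral>\<^sup>+U. f U \<partial>H) = (\<integral>\<^sup>+U. f U \<partial>(distr H borel (\<lambda>A. P ** A)))"
    using haar P by (simp add: haar_orthogonal_def)
  also have "\<dots> = (\<integral>\<^sup>+U. f (P ** U) \<partial>H)"
    by (rule nn_integral_distr[OF m]) simp
  finally show ?thesis by simp
qed

lemma pairH: "pair_sigma_finite H H"
  using prob by (simp add: pair_sigma_finite_def prob_space_imp_sigma_finite)

lemma transpose_inv:
  fixes f :: "real^'n^'n \<Rightarrow> ennreal"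
  assumes f[measurable]: "f \<in> borel_measurable borel"
  shows "(\<integral>\<^sup>+U. f (transpose U) \<partial>H) = (\<integral>\<^sup>+U. f U \<partial>H)"
proof -
  interpret P: prob_space H by (rule prob)
  have tm: "transpose \<in> borel_measurable (borel :: (real^'n^'n) measure)"
    by (rule cont_meas) (auto intro: continuous_intros)
  have ftm: "(\<lambda>U. f (transpose U)) \<in> borel_measurable borel" by (rule measurable_compose[OF tm f])
  have meas: "(\<lambda>(W, U). f (transpose W ** U)) \<in> borel_measurable (H \<Otimes>\<^sub>M H)"
  proof -
    have "(\<lambda>p :: (real^'n^'n) \<times> (real^'n^'n). transpose (fst p) ** snd p) \<in> borel_measurable (H \<Otimes>\<^sub>M H)"
      by (rule cont_meas[OF _ sets_pair_borel[OF setsH setsH]]) (intro continuous_intros)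
    then have "(\<lambda>p. f (transpose (fst p) ** snd p)) \<in> borel_measurable (H \<Otimes>\<^sub>M H)"
      by (rule measurable_compose) (rule f)
    then show ?thesis by (simp add: case_prod_beta)
  qed
  have "(\<integral>\<^sup>+U. f U \<partial>H) = (\<integral>\<^sup>+W. (\<integral>\<^sup>+U. f U \<partial>H) \<partial>H)"
    by (simp add: P.emeasure_space_1)
  also have "\<dots> = (\<integral>\<^sup>+W. (\<integral>\<^sup>+U. f (transpose W ** U) \<partial>H) \<partial>H)"
  proof (rule nn_integral_cong_AE)
    show "AE W in H. (\<integral>\<^sup>+U. f U \<partial>H) = (\<integral>\<^sup>+U. f (transpose W ** U) \<partial>H)"
      using AE_orth by eventually_elim (simp add: left_inv orthogonal_matrix_transpose)
  qed
  also have "\<dots> = (\<integral>\<^sup>+U. (\<integral>\<^sup>+W. f (transpose W ** U) \<partial>H) \<partial>H)"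
    by (rule pair_sigma_finite.Fubini'[OF pairH meas, symmetric])
  also have "\<dots> = (\<integral>\<^sup>+U. (\<integral>\<^sup>+W. f (transpose W) \<partial>H) \<partial>H)"
  proof (rule nn_integral_cong_AE)
    show "AE U in H. (\<integral>\<^sup>+W. f (transpose W ** U) \<partial>H) = (\<integral>\<^sup>+W. f (transpose W) \<partial>H)"
      using AE_orth
    proof eventually_elim
      case (elim U)
      have "(\<integral>\<^sup>+W. f (transpose W ** U) \<partial>H) = (\<integral>\<^sup>+W. (\<lambda>A. f (transpose A)) (transpose U ** W) \<partial>H)"
        by (simp add: matrix_transpose_mul)
      also have "\<dots> = (\<integral>\<^sup>+W. f (transpose W) \<partial>H)"
        by (rule left_inv) (use elim ftm in \<open>auto simp: orthogonal_matrix_transpose\<close>)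
      finally show ?case .
    qed
  qed
  also have "\<dots> = (\<integral>\<^sup>+W. f (transpose W) \<partial>H)"
    by (simp add: P.emeasure_space_1)
  finally show ?thesis by simp
qed

lemma right_inv:
  fixes f :: "real^'n^'n \<Rightarrow> ennreal"
  assumes Om: "orthogonal_matrix Om" and f[measurable]: "f \<in> borel_measurable borel"
  shows "(\<integral>\<^sup>+U. f (U ** Om) \<partial>H) = (\<integral>\<^sup>+U. f U \<partial>H)"
proof -
  have tm: "transpose \<in> borel_measurable (borel :: (real^'n^'n) measure)"
    by (rule cont_meas) (auto intro: continuous_intros)
  have m1: "(\<lambda>U. f (U ** Om)) \<in> borel_measurable borel"
    by (rule measurable_compose[OF cont_meas f]) (auto intro: continuous_intros)
  have "(\<integral>\<^sup>+U. f (U ** Om) \<partial>H) = (\<integral>\<^sup>+U. f (transpose U ** Om) \<partial>H)"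
    using transpose_inv[OF m1] by simp
  also have "\<dots> = (\<integral>\<^sup>+U. (\<lambda>A. f (transpose A)) (transpose Om ** U) \<partial>H)"
    by (simp add: matrix_transpose_mul)
  also have "\<dots> = (\<integral>\<^sup>+U. f (transpose U) \<partial>H)"
    by (rule left_inv) (use Om in \<open>auto simp: orthogonal_matrix_transpose intro: measurable_compose[OF tm]\<close>)
  also have "\<dots> = (\<integral>\<^sup>+U. f U \<partial>H)" by (rule transpose_inv[OF f])
  finally show ?thesis .
qed

end

lemma continuous_on_proj[continuous_intros]:
  "continuous_on S f \<Longrightarrow> continuous_on S (\<lambda>x. proj (f x))"
  unfolding proj_def by (intro continuous_intros)

lemma column_axis: "column j U = U *v axis j 1"
proof -
  have "(U *v axis j 1) $ i = U $ i $ j" for i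
  proof -
    have "(U *v axis j 1) $ i = (\<Sum>k\<in>UNIV. U $ i $ k * (if k = j then 1 else 0))"
      by (simp add: matrix_vector_mult_def axis_def)
    also have "\<dots> = (\<Sum>k\<in>UNIV. if k = j then U $ i $ k else 0)" by (rule sum.cong) auto
    finally show ?thesis by simp
  qed
  then show ?thesis by (simp add: vec_eq_iff column_def)
qed

lemma quad_diag:
  fixes Q :: "real^'n^'n"
  assumes Qd: "Q = P ** diagm d ** transpose P"
  shows "x \<bullet> (Q *v x) = (\<Sum>i\<in>UNIV. d i * ((transpose P *v x) $ i)^2)"
proof -
  define y where "y = transpose P *v x"
  have "Q *v x = P *v (diagm d *v y)" by (simp only: Qd y_def matrix_vector_mul_assoc matrix_mul_assoc)
  then have "x \<bullet> (Q *v x) = (x v* P) \<bullet> (diagm d *v y)" by (simp only: dot_lmul_matrix)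
  also have "x v* P = y" by (simp add: y_def)
  also have "y \<bullet> (diagm d *v y) = (\<Sum>i\<in>UNIV. d i * (y $ i)^2)"
    by (simp add: inner_vec_def diagm_mult power2_eq_square mult.commute mult.left_commute)
  finally show ?thesis by (simp add: y_def)
qed

lemma mv_scale:
  fixes Q :: "real^'n^'m" and v :: "real^'n"
  shows "Q *v (c *\<^sub>R v) = c *\<^sub>R (Q *v v)"
  by (simp add: vec_eq_iff matrix_vector_mult_def sum_distrib_left mult.left_commute vector_scaleR_component real_scaleR_def)

lemma quad_scale:
  fixes Q :: "real^'n^'n" and v :: "real^'n"
  shows "(c *\<^sub>R v) \<bullet> (Q *v (c *\<^sub>R v)) = c^2 * (v \<bullet> (Q *v v))"
  by (simp add: mv_scale power2_eq_square)

context haar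
begin

lemma key:
  fixes Q :: "real^'n^'n"
  assumes oP: "orthogonal_matrix P" and Qd: "Q = P ** diagm d ** transpose P"
    and d: "\<And>i. d i \<ge> 0" and lam: "l > 0"
  shows "(\<integral>\<^sup>+U. ennreal ((1 + 2 * l * (column j U \<bullet> (Q *v column j U))) powr (- real CARD('n) / 2)) \<partial>H)
       = ennreal (\<Prod>i\<in>UNIV. (1 + 2 * l * d i) powr (-1/2))"
proof -
  interpret P: prob_space H by (rule prob)
  interpret G: prob_space "gauss :: (real^('n bit0)) measure" by (rule prob_gauss)
  define q where "q x = x \<bullet> (Q *v x)" for x
  have qd: "q x = (\<Sum>i\<in>UNIV. d i * ((transpose P *v x) $ i)^2)" for x
    unfolding q_def by (rule quad_diag[OF Qd])
  have qnn: "q x \<ge> 0" for x unfolding qd using d by (intro sum_nonneg) simp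
  have qcont: "continuous_on UNIV q" unfolding q_def by (intro continuous_intros)
  define e :: "real^'n" where "e = axis j 1"
  have ne: "norm e = 1" by (simp add: e_def)
  let ?G = "gauss :: (real^('n bit0)) measure"
  have pairHG: "pair_sigma_finite H ?G"
    by (simp add: pair_sigma_finite_def prob_space_imp_sigma_finite prob prob_gauss)
  have S1: "ennreal ((1 + 2 * l * c) powr (- real CARD('n) / 2))
        = (\<integral>\<^sup>+z. ennreal (exp (- (l * c * (norm (proj z))^2))) \<partial>?G)" if c: "c \<ge> 0" for c
  proof -
    have e2: "(\<Sum>i\<in>UNIV. (l * c) * (proj z $ i)^2) = l * c * (norm (proj z))^2" for z
      by (simp add: norm_sq_vec sum_distrib_left)
    have e3: "(\<Prod>i\<in>(UNIV :: 'n set). (1 + 2 * (l * c)) powr (-1/2)) = (1 + 2 * l * c) powr (- real CARD('n) / 2)"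
    proof -
      have "(1 + 2 * (l * c)) \<noteq> 0" using c lam by (smt (verit) mult_nonneg_nonneg)
      then show ?thesis by (simp add: powr_power mult.assoc)
    qed
    have "ennreal ((1 + 2 * l * c) powr (- real CARD('n) / 2)) = ennreal (\<Prod>i\<in>(UNIV :: 'n set). (1 + 2 * (l * c)) powr (-1/2))"
      by (simp only: e3)
    also have "\<dots> = (\<integral>\<^sup>+z. ennreal (exp (- (\<Sum>i\<in>UNIV. (l * c) * (proj z $ i)^2))) \<partial>?G)"
      by (rule gauss_quad_n[symmetric]) (use c lam in simp)
    also have "\<dots> = (\<integral>\<^sup>+z. ennreal (exp (- (l * c * (norm (proj z))^2))) \<partial>?G)"
      by (simp only: e2)
    finally show ?thesis .
  qed
  have mes1: "(\<lambda>(U, z). ennreal (exp (- (l * q (U *v e) * (norm (proj z))^2)))) \<in> borel_measurable (H \<Otimes>\<^sub>M ?G)"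
  proof -
    have "(\<lambda>p :: (real^'n^'n) \<times> (real^('n bit0)). exp (- (l * q (fst p *v e) * (norm (proj (snd p)))^2))) \<in> borel_measurable (H \<Otimes>\<^sub>M ?G)"
      by (rule cont_meas[OF _ sets_pair_borel[OF setsH sets_gauss]])
         (intro continuous_intros continuous_on_compose2[OF qcont]; simp)
    then show ?thesis by (simp add: case_prod_beta)
  qed
  have mes2: "(\<lambda>(U, z). ennreal (exp (- (l * q (U *v proj z))))) \<in> borel_measurable (H \<Otimes>\<^sub>M ?G)"
  proof -
    have "(\<lambda>p :: (real^'n^'n) \<times> (real^('n bit0)). exp (- (l * q (fst p *v proj (snd p))))) \<in> borel_measurable (H \<Otimes>\<^sub>M ?G)"
      by (rule cont_meas[OF _ sets_pair_borel[OF setsH sets_gauss]])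
         (intro continuous_intros continuous_on_compose2[OF qcont]; simp)
    then show ?thesis by (simp add: case_prod_beta)
  qed
  \<comment> \<open>Step 4: rotating x to a multiple of e\<close>
  have S4: "(\<integral>\<^sup>+U. ennreal (exp (- (l * q (U *v e) * (norm x)^2))) \<partial>H) = (\<integral>\<^sup>+U. ennreal (exp (- (l * q (U *v x)))) \<partial>H)" for x
  proof -
    have "norm (norm x *\<^sub>R e) = norm x" using ne by simp
    then obtain f where f: "orthogonal_transformation f" "f (norm x *\<^sub>R e) = x"
      using orthogonal_transformation_exists by metis
    define Om where "Om = matrix f"
    have oO: "orthogonal_matrix Om" using f(1) by (simp add: Om_def orthogonal_transformation_matrix)
    have Ox: "Om *v (norm x *\<^sub>R e) = x"
      using f by (simp add: Om_def matrix_works orthogonal_transformation_linear)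
    have gm: "(\<lambda>U. ennreal (exp (- (l * q (U *v (norm x *\<^sub>R e)))))) \<in> borel_measurable borel"
    proof -
      have "(\<lambda>U. exp (- (l * q (U *v (norm x *\<^sub>R e))))) \<in> borel_measurable borel"
        by (rule borel_measurable_continuous_onI)
           (intro continuous_intros continuous_on_compose2[OF qcont]; simp)
      then show ?thesis by measurable
    qed
    have "(\<integral>\<^sup>+U. ennreal (exp (- (l * q (U *v x)))) \<partial>H)
        = (\<integral>\<^sup>+U. ennreal (exp (- (l * q ((U ** Om) *v (norm x *\<^sub>R e))))) \<partial>H)"
      by (simp add: matrix_vector_mul_assoc[symmetric] Ox)
    also have "\<dots> = (\<integral>\<^sup>+U. ennreal (exp (- (l * q (U *v (norm x *\<^sub>R e))))) \<partial>H)"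
      by (rule right_inv[OF oO gm])
    also have "\<dots> = (\<integral>\<^sup>+U. ennreal (exp (- (l * q (U *v e) * (norm x)^2))) \<partial>H)"
      by (simp add: q_def mv_scale power2_eq_square mult_ac)
    finally show ?thesis by simp
  qed
  have "(\<integral>\<^sup>+U. ennreal ((1 + 2 * l * (column j U \<bullet> (Q *v column j U))) powr (- real CARD('n) / 2)) \<partial>H)
      = (\<integral>\<^sup>+U. (\<integral>\<^sup>+z. ennreal (exp (- (l * q (U *v e) * (norm (proj z))^2))) \<partial>?G) \<partial>H)"
  proof (intro nn_integral_cong)
    fix U :: "real^'n^'n"
    show "ennreal ((1 + 2 * l * (column j U \<bullet> (Q *v column j U))) powr (- real CARD('n) / 2))
      = (\<integral>\<^sup>+z. ennreal (exp (- (l * q (U *v e) * (norm (proj z))^2))) \<partial>?G)"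
      using S1[OF qnn[of "U *v e"]] by (simp add: column_axis e_def q_def)
  qed
  also have "\<dots> = (\<integral>\<^sup>+z. (\<integral>\<^sup>+U. ennreal (exp (- (l * q (U *v e) * (norm (proj z))^2))) \<partial>H) \<partial>?G)"
    by (rule pair_sigma_finite.Fubini'[OF pairHG mes1, symmetric])
  also have "\<dots> = (\<integral>\<^sup>+z. (\<integral>\<^sup>+U. ennreal (exp (- (l * q (U *v proj z)))) \<partial>H) \<partial>?G)"
    by (simp add: S4)
  also have "\<dots> = (\<integral>\<^sup>+U. (\<integral>\<^sup>+z. ennreal (exp (- (l * q (U *v proj z)))) \<partial>?G) \<partial>H)"
    by (rule pair_sigma_finite.Fubini'[OF pairHG mes2])
  also have "\<dots> = (\<integral>\<^sup>+U. (\<integral>\<^sup>+z. ennreal (exp (- (l * q (proj z)))) \<partial>?G) \<partial>H)"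
  proof (rule nn_integral_cong_AE)
    have fm: "(\<lambda>y. ennreal (exp (- (l * q y)))) \<in> borel_measurable borel"
    proof -
      have "(\<lambda>y. exp (- (l * q y))) \<in> borel_measurable borel"
        by (rule borel_measurable_continuous_onI)
           (intro continuous_intros continuous_on_compose2[OF qcont]; simp)
      then show ?thesis by measurable
    qed
    show "AE U in H. (\<integral>\<^sup>+z. ennreal (exp (- (l * q (U *v proj z)))) \<partial>?G) = (\<integral>\<^sup>+z. ennreal (exp (- (l * q (proj z)))) \<partial>?G)"
      using AE_orth by eventually_elim (rule gauss_orth_inv_n[OF _ fm])
  qed
  also have "\<dots> = (\<integral>\<^sup>+z. ennreal (exp (- (l * q (proj z)))) \<partial>?G)"
    by (simp add: P.emeasure_space_1)
  also have "\<dots> = (\<integral>\<^sup>+z. ennreal (exp (- (\<Sum>i\<in>UNIV. (l * d i) * ((transpose P *v proj z) $ i)^2))) \<partial>?G)"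
    by (simp add: qd sum_distrib_left mult.assoc)
  also have "\<dots> = (\<integral>\<^sup>+z. ennreal (exp (- (\<Sum>i\<in>UNIV. (l * d i) * (proj z $ i)^2))) \<partial>?G)"
  proof (rule gauss_orth_inv_n[where f = "\<lambda>y. ennreal (exp (- (\<Sum>i\<in>UNIV. (l * d i) * (y $ i)^2)))"])
    show "orthogonal_matrix (transpose P)" using oP by (simp add: orthogonal_matrix_transpose)
  qed measurable
  also have "\<dots> = ennreal (\<Prod>i\<in>UNIV. (1 + 2 * (l * d i)) powr (-1/2))"
    by (rule gauss_quad_n) (use d lam in simp)
  finally show ?thesis by (simp add: mult.assoc)
qed

end

lemma gamma_laplace:
  fixes a b :: real
  assumes a: "a > 0" and b: "b > 0"
  shows "(\<integral>\<^sup>+x. ennreal (indicator {0..} x * x powr (a - 1) * exp (- (b * x))) \<partial>lborel) = ennreal (Gamma a / b powr a)"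
proof -
  define f where "f t = indicator {0..} t * t powr (a - 1) / exp t" for t :: real
  have fm: "(\<lambda>t. ennreal (f t)) \<in> borel_measurable borel" unfolding f_def by measurable
  have "ennreal (Gamma a) = (\<integral>\<^sup>+t. ennreal (f t) \<partial>lborel)"
    unfolding f_def by (rule Gamma_conv_nn_integral_real[OF a])
  also have "\<dots> = ennreal \<bar>b\<bar> * (\<integral>\<^sup>+x. ennreal (f (0 + b * x)) \<partial>lborel)"
    using b by (intro nn_integral_real_affine) (auto simp: fm)
  also have "(\<integral>\<^sup>+x. ennreal (f (0 + b * x)) \<partial>lborel)
      = (\<integral>\<^sup>+x. ennreal (b powr (a - 1)) * ennreal (indicator {0..} x * x powr (a - 1) * exp (- (b * x))) \<partial>lborel)"
  proof (intro nn_integral_cong)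
    fix x :: real
    have "f (0 + b * x) = b powr (a - 1) * (indicator {0..} x * x powr (a - 1) * exp (- (b * x)))"
      using b by (auto simp: f_def indicator_def powr_mult exp_minus field_simps zero_le_mult_iff)
    then show "ennreal (f (0 + b * x)) = ennreal (b powr (a - 1)) * ennreal (indicator {0..} x * x powr (a - 1) * exp (- (b * x)))"
      by (simp add: ennreal_mult'[symmetric])
  qed
  also have "\<dots> = ennreal (b powr (a - 1)) * (\<integral>\<^sup>+x. ennreal (indicator {0..} x * x powr (a - 1) * exp (- (b * x))) \<partial>lborel)"
    by (rule nn_integral_cmult) measurable
  finally have eq0: "ennreal (Gamma a) = ennreal \<bar>b\<bar> * (ennreal (b powr (a - 1)) * (\<integral>\<^sup>+x. ennreal (indicator {0..} x * x powr (a - 1) * exp (- (b * x))) \<partial>lborel))" .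
  define J where "J = (\<integral>\<^sup>+x. ennreal (indicator {0..} x * x powr (a - 1) * exp (- (b * x))) \<partial>lborel)"
  have bb: "b * b powr (a - 1) = b powr a"
  proof -
    have "b powr a = b powr (1 + (a - 1))" by simp
    also have "\<dots> = b powr 1 * b powr (a - 1)" by (rule powr_add)
    also have "\<dots> = b * b powr (a - 1)" using b by simp
    finally show ?thesis by simp
  qed
  have bpos: "b powr a > 0" using b by simp
  have eq: "ennreal (Gamma a) = ennreal (b powr a) * J"
  proof -
    have "ennreal \<bar>b\<bar> * (ennreal (b powr (a - 1)) * J) = ennreal (b * b powr (a - 1)) * J"
      using b by (simp add: ennreal_mult mult.assoc)
    then show ?thesis using eq0 by (simp add: J_def bb)
  qed
  have "ennreal (Gamma a / b powr a) = ennreal (1 / b powr a * Gamma a)" by simp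
  also have "\<dots> = ennreal (1 / b powr a) * ennreal (Gamma a)" by (rule ennreal_mult') (use bpos in simp)
  also have "\<dots> = ennreal (1 / b powr a) * (ennreal (b powr a) * J)" by (simp only: eq)
  also have "\<dots> = (ennreal (1 / b powr a) * ennreal (b powr a)) * J" by (simp add: mult.assoc)
  also have "ennreal (1 / b powr a) * ennreal (b powr a) = ennreal (1 / b powr a * b powr a)"
    by (rule ennreal_mult'[symmetric]) (use bpos in simp)
  also have "1 / b powr a * b powr a = 1" using bpos by simp
  finally have "J = ennreal (Gamma a / b powr a)" by simp
  then show ?thesis by (simp add: J_def)
qed

lemma chi2_laplace:
  fixes k :: nat and c :: real
  assumes k: "k > 0" and c: "c \<ge> 0"
  shows "(\<integral>\<^sup>+x. ennreal (exp (- (c * \<bar>x\<bar>))) \<partial>chi2 k) = ennreal ((1 + 2 * c) powr (- real k / 2))"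
proof -
  define a where "a = real k / 2"
  define b where "b = 1 / 2 + c"
  have a: "a > 0" using k by (simp add: a_def)
  have b: "b > 0" using c by (simp add: b_def)
  define C where "C = 2 powr a * Gamma a"
  have C: "C > 0" using a by (simp add: C_def Gamma_real_pos)
  have dm: "(\<lambda>x. ennreal (chi2_density k x)) \<in> borel_measurable borel"
    unfolding chi2_density_def by measurable
  have "(\<integral>\<^sup>+x. ennreal (exp (- (c * \<bar>x\<bar>))) \<partial>chi2 k) = (\<integral>\<^sup>+x. ennreal (chi2_density k x) * ennreal (exp (- (c * \<bar>x\<bar>))) \<partial>lborel)"
    unfolding chi2_def by (rule nn_integral_density) (use dm in auto)
  also have "\<dots> = (\<integral>\<^sup>+x. ennreal (1 / C) * ennreal (indicator {0..} x * x powr (a - 1) * exp (- (b * x))) \<partial>lborel)"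
  proof (intro nn_integral_cong)
    fix x :: real
    have "chi2_density k x * exp (- (c * \<bar>x\<bar>)) = 1 / C * (indicator {0..} x * x powr (a - 1) * exp (- (b * x)))"
    proof (cases "x > 0")
      case True
      have ee: "- x / 2 + - (c * x) = - (b * x)" by (simp add: b_def field_simps)
      have "exp (- x / 2) * exp (- (c * x)) = exp (- (b * x))"
        by (simp only: exp_add[symmetric] ee)
      then show ?thesis using True C
        by (simp add: chi2_density_def a_def C_def field_simps mult.assoc[symmetric])
    next
      case False
      then show ?thesis by (auto simp: chi2_density_def indicator_def)
    qed
    note th = this
    have dn: "chi2_density k x \<ge> 0"
      using k by (auto simp: chi2_density_def intro!: divide_nonneg_pos mult_nonneg_nonneg Gamma_real_pos)
    have "ennreal (chi2_density k x) * ennreal (exp (- (c * \<bar>x\<bar>))) = ennreal (chi2_density k x * exp (- (c * \<bar>x\<bar>)))"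
      by (rule ennreal_mult[symmetric]) (use dn in auto)
    also have "\<dots> = ennreal (1 / C * (indicator {0..} x * x powr (a - 1) * exp (- (b * x))))" by (simp only: th)
    also have "\<dots> = ennreal (1 / C) * ennreal (indicator {0..} x * x powr (a - 1) * exp (- (b * x)))"
      by (rule ennreal_mult') (use C in simp)
    finally show "ennreal (chi2_density k x) * ennreal (exp (- (c * \<bar>x\<bar>))) = ennreal (1 / C) * ennreal (indicator {0..} x * x powr (a - 1) * exp (- (b * x)))" .
  qed
  also have "\<dots> = ennreal (1 / C) * (\<integral>\<^sup>+x. ennreal (indicator {0..} x * x powr (a - 1) * exp (- (b * x))) \<partial>lborel)"
    by (rule nn_integral_cmult) measurable
  also have "\<dots> = ennreal (1 / C) * ennreal (Gamma a / b powr a)"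
    by (simp add: gamma_laplace[OF a b])
  also have "\<dots> = ennreal (1 / C * (Gamma a / b powr a))"
    by (rule ennreal_mult'[symmetric]) (use C in simp)
  also have "1 / C * (Gamma a / b powr a) = (1 + 2 * c) powr (- real k / 2)"
  proof -
    have "2 powr a * b powr a = (1 + 2 * c) powr a" using c by (simp add: powr_mult[symmetric] b_def algebra_simps)
    moreover have "Gamma (real k / 2) \<noteq> 0" using Gamma_real_pos[OF a] by (simp add: a_def)
    ultimately show ?thesis using a by (simp add: C_def a_def powr_minus field_simps)
  qed
  finally show ?thesis .
qed

lemma prob_chi2: "k > 0 \<Longrightarrow> prob_space (chi2 k)"
proof -
  assume k: "k > 0"
  have "(\<integral>\<^sup>+x. ennreal (exp (- (0 * \<bar>x\<bar>))) \<partial>chi2 k) = ennreal ((1 + 2 * 0) powr (- real k / 2))"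
    by (rule chi2_laplace[OF k]) simp
  then have "emeasure (chi2 k) (space (chi2 k)) = 1" by simp
  then show ?thesis by (rule prob_spaceI)
qed

lemma sets_chi2: "sets (chi2 k) = sets borel" by (simp add: chi2_def)

lemma nn_integral_pair_prod:
  assumes sf: "sigma_finite_measure M2"
    and f[measurable]: "f \<in> borel_measurable M1" and g[measurable]: "g \<in> borel_measurable M2"
  shows "(\<integral>\<^sup>+p. f (fst p) * g (snd p) \<partial>(M1 \<Otimes>\<^sub>M M2)) = (\<integral>\<^sup>+x. f x \<partial>M1) * (\<integral>\<^sup>+y. g y \<partial>M2)"
proof -
  have "(\<integral>\<^sup>+p. f (fst p) * g (snd p) \<partial>(M1 \<Otimes>\<^sub>M M2)) = (\<integral>\<^sup>+x. (\<integral>\<^sup>+y. f x * g y \<partial>M2) \<partial>M1)"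
    using sigma_finite_measure.nn_integral_fst[OF sf, of "\<lambda>p. f (fst p) * g (snd p)" M1] by simp
  also have "\<dots> = (\<integral>\<^sup>+x. f x * (\<integral>\<^sup>+y. g y \<partial>M2) \<partial>M1)"
    by (simp add: nn_integral_cmult)
  also have "\<dots> = (\<integral>\<^sup>+x. f x \<partial>M1) * (\<integral>\<^sup>+y. g y \<partial>M2)"
    by (rule nn_integral_multc) simp
  finally show ?thesis .
qed

abbreviation PN :: "('n::finite \<Rightarrow> real) measure" where
  "PN \<equiv> PiM UNIV (\<lambda>j::'n. chi2 CARD('n))"

lemma prob_PN: "prob_space (PN :: ('n::finite \<Rightarrow> real) measure)"
  by (intro prob_space_PiM prob_chi2) simp

lemma comp_PN[measurable]: "(\<lambda>N. N j) \<in> borel_measurable (PN :: ('n::finite \<Rightarrow> real) measure)"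
proof -
  have "(\<lambda>N. N j) \<in> (PN :: ('n::finite \<Rightarrow> real) measure) \<rightarrow>\<^sub>M chi2 CARD('n)"
    by (rule measurable_component_singleton) simp
  then show ?thesis using measurable_cong_sets[OF refl sets_chi2] by blast
qed

lemma PN_component:
  assumes c: "c \<ge> 0"
  shows "(\<integral>\<^sup>+N. ennreal (exp (- (c * \<bar>N j\<bar>))) \<partial>(PN :: ('n::finite \<Rightarrow> real) measure)) = ennreal ((1 + 2 * c) powr (- real CARD('n) / 2))"
proof -
  have "(\<integral>\<^sup>+x. ennreal (exp (- (c * \<bar>x\<bar>))) \<partial>chi2 CARD('n)) = (\<integral>\<^sup>+x. ennreal (exp (- (c * \<bar>x\<bar>))) \<partial>(distr (PN :: ('n \<Rightarrow> real) measure) (chi2 CARD('n)) (\<lambda>N. N j)))"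
    by (subst distr_PiM_component) (auto intro: prob_chi2)
  also have "\<dots> = (\<integral>\<^sup>+N. ennreal (exp (- (c * \<bar>N j\<bar>))) \<partial>(PN :: ('n::finite \<Rightarrow> real) measure))"
  proof (rule nn_integral_distr)
    show "(\<lambda>N. N j) \<in> (PN :: ('n::finite \<Rightarrow> real) measure) \<rightarrow>\<^sub>M chi2 CARD('n)"
      by (rule measurable_component_singleton) simp
    have "(\<lambda>x. ennreal (exp (- (c * \<bar>x\<bar>)))) \<in> borel_measurable borel" by measurable
    moreover have "sets (distr (PN :: ('n::finite \<Rightarrow> real) measure) (chi2 CARD('n)) (\<lambda>N. N j)) = sets borel"
      by (simp add: sets_chi2)
    ultimately show "(\<lambda>x. ennreal (exp (- (c * \<bar>x\<bar>)))) \<in> borel_measurable (distr (PN :: ('n::finite \<Rightarrow> real) measure) (chi2 CARD('n)) (\<lambda>N. N j))"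
      using measurable_cong_sets[OF _ refl] by blast
  qed
  finally show ?thesis using chi2_laplace[OF _ c, of "CARD('n)"] by simp
qed

definition zeta :: "real^'n^'n \<Rightarrow> real^'n^'n \<Rightarrow> 'n::finite \<Rightarrow> (((real^'n^'n) \<times> (real^'n^'n)) \<times> (('n \<Rightarrow> real) \<times> ('n \<Rightarrow> real))) \<Rightarrow> real" where
  "zeta Q R j \<omega> = \<bar>fst (snd \<omega>) j\<bar> * (column j (fst (fst \<omega>)) \<bullet> (Q *v column j (fst (fst \<omega>))))
     + \<bar>snd (snd \<omega>) j\<bar> * (column j (snd (fst \<omega>)) \<bullet> (R *v column j (snd (fst \<omega>))))"

lemma vstack_quad: "vstack x y \<bullet> (block_diag Q R *v vstack x y) = x \<bullet> (Q *v x) + y \<bullet> (R *v y)"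
proof -
  have l: "(block_diag Q R *v vstack x y) $ Inl i = (Q *v x) $ i" for i
    by (simp add: matrix_vector_mult_def block_diag_def vstack_def sum_UNIV_plus)
  have r: "(block_diag Q R *v vstack x y) $ Inr i = (R *v y) $ i" for i
    by (simp add: matrix_vector_mult_def block_diag_def vstack_def sum_UNIV_plus)
  show ?thesis
    by (simp add: inner_vec_def sum_UNIV_plus l r) (simp add: vstack_def)
qed

lemma sqrt_quad: "(sqrt a *\<^sub>R x) \<bullet> (Q *v (sqrt a *\<^sub>R x)) = \<bar>a\<bar> * (x \<bullet> (Q *v x))"
  for Q :: "real^'n^'n" and x :: "real^'n"
  by (simp add: mv_scale real_sqrt_mult_self mult.assoc[symmetric])

lemma zeta_let:
  "(let U = fst (fst \<omega>); V = snd (fst \<omega>);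
        N = fst (snd \<omega>); M = snd (snd \<omega>);
        a = (\<lambda>j. vstack (sqrt (N j) *\<^sub>R column j U) (sqrt (M j) *\<^sub>R column j V));
        \<zeta> = (\<lambda>j. a j \<bullet> (block_diag Q R *v a j))
    in Min (\<zeta> ` UNIV)) = Min ((\<lambda>j. zeta Q R j \<omega>) ` UNIV)"
  unfolding Let_def zeta_def vstack_quad sqrt_quad ..

context haar
begin

lemma laplace_zeta:
  fixes Q R :: "real^'n^'n"
  assumes oP1: "orthogonal_matrix P1" and Q: "Q = P1 ** diagm d1 ** transpose P1" and d1: "\<And>i. d1 i \<ge> 0"
    and oP2: "orthogonal_matrix P2" and R: "R = P2 ** diagm d2 ** transpose P2" and d2: "\<And>i. d2 i \<ge> 0"
    and l: "l > 0"
  shows "(\<integral>\<^sup>+\<omega>. ennreal (exp (- (l * zeta Q R j \<omega>))) \<partial>((H \<Otimes>\<^sub>M H) \<Otimes>\<^sub>M (PN \<Otimes>\<^sub>M PN)))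
    = ennreal (\<Prod>i\<in>UNIV. (1 + 2 * l * d1 i) powr (-1/2)) * ennreal (\<Prod>i\<in>UNIV. (1 + 2 * l * d2 i) powr (-1/2))"
proof -
  interpret PNp: prob_space "PN :: ('n \<Rightarrow> real) measure" by (rule prob_PN)
  interpret PNPN: pair_prob_space "PN :: ('n \<Rightarrow> real) measure" "PN :: ('n \<Rightarrow> real) measure" by unfold_locales
  interpret HH: pair_prob_space H H using prob by (simp add: pair_prob_space_def pair_sigma_finite_def prob_space_imp_sigma_finite)
  define q where "q U = column j U \<bullet> (Q *v column j U)" for U
  define r where "r V = column j V \<bullet> (R *v column j V)" for V
  have qnn: "q U \<ge> 0" for U unfolding q_def quad_diag[OF Q] using d1 by (intro sum_nonneg) simp
  have rnn: "r V \<ge> 0" for V unfolding r_def quad_diag[OF R] using d2 by (intro sum_nonneg) simp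
  have mq[measurable]: "q \<in> borel_measurable H"
    by (rule cont_meas[OF _ setsH]) (unfold q_def column_def, intro continuous_intros)
  have mr[measurable]: "r \<in> borel_measurable H"
    by (rule cont_meas[OF _ setsH]) (unfold r_def column_def, intro continuous_intros)
  define h1 where "h1 U N = ennreal (exp (- ((l * q U) * \<bar>N j\<bar>)))" for U and N :: "'n \<Rightarrow> real"
  define h2 where "h2 V M = ennreal (exp (- ((l * r V) * \<bar>M j\<bar>)))" for V and M :: "'n \<Rightarrow> real"
  have mh1[measurable]: "(\<lambda>p. h1 (fst p) (snd p)) \<in> borel_measurable (H \<Otimes>\<^sub>M PN)" unfolding h1_def by measurable
  have mh2[measurable]: "(\<lambda>p. h2 (fst p) (snd p)) \<in> borel_measurable (H \<Otimes>\<^sub>M PN)" unfolding h2_def by measurable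
  have eqz: "ennreal (exp (- (l * zeta Q R j \<omega>))) = h1 (fst (fst \<omega>)) (fst (snd \<omega>)) * h2 (snd (fst \<omega>)) (snd (snd \<omega>))" for \<omega>
  proof -
    have "exp (- (l * zeta Q R j \<omega>)) = exp (- ((l * q (fst (fst \<omega>))) * \<bar>fst (snd \<omega>) j\<bar>)) * exp (- ((l * r (snd (fst \<omega>))) * \<bar>snd (snd \<omega>) j\<bar>))"
      by (simp add: zeta_def q_def r_def exp_add[symmetric] algebra_simps)
    then show ?thesis by (simp add: h1_def h2_def ennreal_mult)
  qed
  have L1: "(\<integral>\<^sup>+N. h1 U N \<partial>PN) = ennreal ((1 + 2 * (l * q U)) powr (- real CARD('n) / 2))" for U
    unfolding h1_def by (rule PN_component) (use l qnn in simp)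
  have L2: "(\<integral>\<^sup>+M. h2 V M \<partial>PN) = ennreal ((1 + 2 * (l * r V)) powr (- real CARD('n) / 2))" for V
    unfolding h2_def by (rule PN_component) (use l rnn in simp)
  have "(\<integral>\<^sup>+\<omega>. ennreal (exp (- (l * zeta Q R j \<omega>))) \<partial>((H \<Otimes>\<^sub>M H) \<Otimes>\<^sub>M (PN \<Otimes>\<^sub>M PN)))
      = (\<integral>\<^sup>+\<omega>. h1 (fst (fst \<omega>)) (fst (snd \<omega>)) * h2 (snd (fst \<omega>)) (snd (snd \<omega>)) \<partial>((H \<Otimes>\<^sub>M H) \<Otimes>\<^sub>M (PN \<Otimes>\<^sub>M PN)))"
    by (simp add: eqz)
  also have "\<dots> = (\<integral>\<^sup>+p. (\<integral>\<^sup>+y. h1 (fst p) (fst y) * h2 (snd p) (snd y) \<partial>(PN \<Otimes>\<^sub>M PN)) \<partial>(H \<Otimes>\<^sub>M H))"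
  proof -
    have m\<Omega>: "(\<lambda>\<omega>. h1 (fst (fst \<omega>)) (fst (snd \<omega>)) * h2 (snd (fst \<omega>)) (snd (snd \<omega>))) \<in> borel_measurable ((H \<Otimes>\<^sub>M H) \<Otimes>\<^sub>M (PN \<Otimes>\<^sub>M PN))"
      unfolding h1_def h2_def by measurable
    show ?thesis using PNPN.nn_integral_fst[OF m\<Omega>] by simp
  qed
  also have "\<dots> = (\<integral>\<^sup>+p. ennreal ((1 + 2 * (l * q (fst p))) powr (- real CARD('n) / 2)) * ennreal ((1 + 2 * (l * r (snd p))) powr (- real CARD('n) / 2)) \<partial>(H \<Otimes>\<^sub>M H))"
  proof (intro nn_integral_cong)
    fix p :: "(real^'n^'n) \<times> (real^'n^'n)"
    have "(\<integral>\<^sup>+y. h1 (fst p) (fst y) * h2 (snd p) (snd y) \<partial>(PN \<Otimes>\<^sub>M PN)) = (\<integral>\<^sup>+N. h1 (fst p) N \<partial>PN) * (\<integral>\<^sup>+M. h2 (snd p) M \<partial>PN)"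
      by (rule nn_integral_pair_prod) (auto simp: h1_def h2_def prob_space_imp_sigma_finite prob_PN)
    then show "(\<integral>\<^sup>+y. h1 (fst p) (fst y) * h2 (snd p) (snd y) \<partial>(PN \<Otimes>\<^sub>M PN)) = ennreal ((1 + 2 * (l * q (fst p))) powr (- real CARD('n) / 2)) * ennreal ((1 + 2 * (l * r (snd p))) powr (- real CARD('n) / 2))"
      by (simp add: L1 L2)
  qed
  also have "\<dots> = (\<integral>\<^sup>+U. ennreal ((1 + 2 * (l * q U)) powr (- real CARD('n) / 2)) \<partial>H) * (\<integral>\<^sup>+V. ennreal ((1 + 2 * (l * r V)) powr (- real CARD('n) / 2)) \<partial>H)"
    by (rule nn_integral_pair_prod) (auto simp: prob prob_space_imp_sigma_finite)
  also have "(\<integral>\<^sup>+U. ennreal ((1 + 2 * (l * q U)) powr (- real CARD('n) / 2)) \<partial>H) = ennreal (\<Prod>i\<in>UNIV. (1 + 2 * l * d1 i) powr (-1/2))"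
    using key[OF oP1 Q d1 l, of j] by (simp add: q_def mult.assoc)
  also have "(\<integral>\<^sup>+V. ennreal ((1 + 2 * (l * r V)) powr (- real CARD('n) / 2)) \<partial>H) = ennreal (\<Prod>i\<in>UNIV. (1 + 2 * l * d2 i) powr (-1/2))"
    using key[OF oP2 R d2 l, of j] by (simp add: r_def mult.assoc)
  finally show ?thesis .
qed

end

lemma B_calc:
  fixes n r :: nat and Pr Pall l :: real
  assumes n: "n \<ge> 1" and r: "r \<ge> 1" and Pr: "Pr > 0" and le: "(2 * l)^r * Pr \<le> Pall"
    and l_def: "l = exp 1 * real n powr (2 / real r) / (2 * Pr powr (1 / real r))"
  shows "real n * Pall powr (-1/2) \<le> exp (- (real r / 2))"
proof -
  define G where "G = Pr powr (1 / real r)"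
  have G: "G > 0" using Pr by (simp add: G_def)
  have Gr: "G ^ r = Pr"
  proof -
    have "G ^ r = Pr powr (real r * (1 / real r))" unfolding G_def using Pr by (simp add: powr_power)
    also have "\<dots> = Pr" using r Pr by simp
    finally show ?thesis .
  qed
  have nr: "(real n powr (2 / real r)) ^ r = (real n)^2"
  proof -
    have "(real n powr (2 / real r)) ^ r = real n powr (real r * (2 / real r))" using n by (simp add: powr_power)
    also have "\<dots> = real n powr 2" using r by simp
    also have "\<dots> = (real n)^2" using n by (simp add: powr_numeral)
    finally show ?thesis .
  qed
  have e: "(exp 1) ^ r = exp (real r)" by (simp add: exp_of_nat_mult[symmetric])
  have twol: "2 * l = exp 1 * real n powr (2 / real r) / G" using l_def G by (simp add: G_def)
  have x: "(2 * l)^r * Pr = exp (real r) * (real n)^2"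
  proof -
    have "Pr \<noteq> 0" using Pr by simp
    then show ?thesis unfolding twol using G Gr by (simp add: power_divide power_mult_distrib nr e)
  qed
  have xpos: "exp (real r) * (real n)^2 > 0" using n by simp
  have "Pall powr (-1/2) \<le> (exp (real r) * (real n)^2) powr (-1/2)"
    using le xpos unfolding x by (intro powr_mono2') auto
  also have "(exp (real r) * (real n)^2) powr (-1/2) = exp (- (real r / 2)) * (1 / real n)"
  proof -
    have "(exp (real r) * (real n)^2) powr (-1/2) = exp (real r) powr (-1/2) * ((real n)^2) powr (-1/2)"
      by (rule powr_mult)
    also have "exp (real r) powr (-1/2) = exp (- (real r / 2))" by (simp add: exp_powr_real)
    also have "((real n)^2) powr (-1/2) = 1 / real n"
    proof -
      have "((real n)^2) powr (-1/2) = 1 / ((real n)^2) powr (1/2)" by (simp add: powr_minus_divide)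
      also have "((real n)^2) powr (1/2) = real n" by (simp add: powr_half_sqrt)
      finally show ?thesis .
    qed
    finally show ?thesis .
  qed
  finally have "Pall powr (-1/2) \<le> exp (- (real r / 2)) * (1 / real n)" .
  then have "real n * Pall powr (-1/2) \<le> real n * (exp (- (real r / 2)) * (1 / real n))"
    using n by (intro mult_left_mono) auto
  also have "\<dots> = exp (- (real r / 2))" using n by simp
  finally show ?thesis .
qed

lemma m_calc:
  fixes n r :: nat and Pr l :: real
  assumes n: "n \<ge> 1" and r: "r \<ge> 1" and Pr: "Pr > 0"
    and l_def: "l = exp 1 * real n powr (2 / real r) / (2 * Pr powr (1 / real r))"
  shows "real r / (2 * l) = exp (-1) * real r * real n powr (- 2 / real r) * Pr powr (1 / real r)"
proof -
  have a: "real n powr (- 2 / real r) = 1 / real n powr (2 / real r)"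
    using n by (simp add: powr_minus_divide[symmetric])
  have b: "exp (-1) = 1 / exp (1::real)" by (metis exp_minus inverse_eq_divide)
  show ?thesis unfolding l_def a b using n Pr by (simp add: field_simps)
qed

lemma tangent:
  fixes l m z :: real
  assumes l: "l > 0"
  shows "m + 1 / l \<le> z + (1 / l * exp (l * m)) * exp (- (l * z))"
proof -
  have "1 + (l * m - l * z) \<le> exp (l * m - l * z)" by (rule exp_ge_add_one_self)
  also have "exp (l * m - l * z) = exp (l * m) * exp (- (l * z))" by (simp add: exp_diff exp_minus field_simps)
  finally have "1 + (l * m - l * z) \<le> exp (l * m) * exp (- (l * z))" .
  then have "(1 + (l * m - l * z)) / l \<le> (exp (l * m) * exp (- (l * z))) / l"
    using l by (intro divide_right_mono) auto
  then show ?thesis using l by (simp add: field_simps)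
qed

definition qf :: "real^'n^'n \<Rightarrow> 'n::finite \<Rightarrow> real^'n^'n \<Rightarrow> real" where
  "qf A j U = column j U \<bullet> (A *v column j U)"

lemma zeta_alt: "zeta Q R j = (\<lambda>\<omega>. \<bar>fst (snd \<omega>) j\<bar> * qf Q j (fst (fst \<omega>)) + \<bar>snd (snd \<omega>) j\<bar> * qf R j (snd (fst \<omega>)))"
  by (rule ext) (simp add: zeta_def qf_def)

lemma zeta_nonneg: "psd_matrix Q \<Longrightarrow> psd_matrix R \<Longrightarrow> zeta Q R j \<omega> \<ge> 0"
  unfolding zeta_def psd_matrix_def by (intro add_nonneg_nonneg mult_nonneg_nonneg) auto

context haar
begin

lemma qf_meas[measurable]: "qf A j \<in> borel_measurable H"
  by (rule cont_meas[OF _ setsH]) (unfold qf_def column_def, intro continuous_intros)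

lemma zeta_meas[measurable]: "zeta Q R j \<in> borel_measurable ((H \<Otimes>\<^sub>M H) \<Otimes>\<^sub>M (PN \<Otimes>\<^sub>M PN))"
  unfolding zeta_alt by measurable

end

lemma eig_desc_mem:
  assumes "1 \<le> l" "l \<le> size (eigen_mset A)"
  shows "eig_desc A l \<in># eigen_mset A"
proof -
  define xs where "xs = rev (sorted_list_of_multiset (eigen_mset A))"
  have "length xs = size (eigen_mset A)" unfolding xs_def
    by (metis length_rev mset_sorted_list_of_multiset size_mset)
  then have "xs ! (l - 1) \<in> set xs" using assms by (intro nth_mem) auto
  then show ?thesis by (simp add: eig_desc_def xs_def)
qed

theorem mainTheorem5:
  fixes Q R :: "real^'n^'n"
    and H :: "(real^'n^'n) measure"
    and \<S> :: "nat set"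
  assumes "psd_matrix Q" and "psd_matrix R"
    and "haar_orthogonal H"
    and "\<S> \<noteq> {}"
    and "\<S> \<subseteq> {1 .. card {l \<in> {1 .. 2 * CARD('n)}. eig_desc (block_diag Q R) l > 0}}"
  shows "(\<integral>\<^sup>+ \<omega>. ennreal (
            let U = fst (fst \<omega>); V = snd (fst \<omega>);
                N = fst (snd \<omega>); M = snd (snd \<omega>);
                a = (\<lambda>j. vstack (sqrt (N j) *\<^sub>R column j U) (sqrt (M j) *\<^sub>R column j V));
                \<zeta> = (\<lambda>j. a j \<bullet> (block_diag Q R *v a j))
            in Min (\<zeta> ` UNIV))
          \<partial>((H \<Otimes>\<^sub>M H) \<Otimes>\<^sub>M
              (PiM UNIV (\<lambda>j::'n. chi2 CARD('n)) \<Otimes>\<^sub>M PiM UNIV (\<lambda>j::'n. chi2 CARD('n)))))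
        \<ge> ennreal (exp (-1) * real (card \<S>) * real CARD('n) powr (- 2 / real (card \<S>))
              * (\<Prod>l\<in>\<S>. eig_desc (block_diag Q R) l) powr (1 / real (card \<S>)))"
proof -
  interpret haar H by unfold_locales (rule assms(3))
  obtain P1 d1 P2 d2 where oP1: "orthogonal_matrix P1" and Qd: "Q = P1 ** diagm d1 ** transpose P1"
    and oP2: "orthogonal_matrix P2" and Rd: "R = P2 ** diagm d2 ** transpose P2"
    and d1: "\<And>i. d1 i \<ge> 0" and d2: "\<And>i. d2 i \<ge> 0"
    and E: "eigen_mset (block_diag Q R) = image_mset (case_sum d1 d2) (mset_set UNIV)"
    using eigen_block[OF assms(1) assms(2)] by blast
  define n where "n = CARD('n)"
  have n1: "n \<ge> 1" by (simp add: n_def Suc_le_eq)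
  define dd where "dd = case_sum d1 d2"
  have ddnn: "dd k \<ge> 0" for k by (cases k) (auto simp: dd_def d1 d2)
  let ?\<Omega> = "(H \<Otimes>\<^sub>M H) \<Otimes>\<^sub>M (PN \<Otimes>\<^sub>M PN) :: (((real^'n^'n) \<times> (real^'n^'n)) \<times> (('n \<Rightarrow> real) \<times> ('n \<Rightarrow> real))) measure"
  interpret Om: prob_space ?\<Omega> by (intro prob_space_pair prob prob_PN)
  define Z where "Z \<omega> = Min ((\<lambda>j. zeta Q R j \<omega>) ` UNIV)" for \<omega>
  have Zm[measurable]: "Z \<in> borel_measurable ?\<Omega>"
    unfolding Z_def by (rule borel_measurable_Min) auto
  have Zmin: "\<exists>j. Z \<omega> = zeta Q R j \<omega>" for \<omega>
  proof -
    have "Z \<omega> \<in> (\<lambda>j. zeta Q R j \<omega>) ` UNIV" unfolding Z_def by (rule Min_in) auto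
    then show ?thesis by auto
  qed
  have Znn: "Z \<omega> \<ge> 0" for \<omega> using Zmin[of \<omega>] zeta_nonneg[OF assms(1,2)] by metis
  have integrand: "(\<integral>\<^sup>+ \<omega>. ennreal (
            let U = fst (fst \<omega>); V = snd (fst \<omega>);
                N = fst (snd \<omega>); M = snd (snd \<omega>);
                a = (\<lambda>j. vstack (sqrt (N j) *\<^sub>R column j U) (sqrt (M j) *\<^sub>R column j V));
                \<zeta> = (\<lambda>j. a j \<bullet> (block_diag Q R *v a j))
            in Min (\<zeta> ` UNIV)) \<partial>?\<Omega>) = (\<integral>\<^sup>+ \<omega>. ennreal (Z \<omega>) \<partial>?\<Omega>)"
    by (simp only: zeta_let Z_def)
  define r where "r = card \<S>"
  have card2: "card {l \<in> {1 .. 2 * CARD('n)}. eig_desc (block_diag Q R) l > 0} \<le> CARD('n + 'n)"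
  proof -
    have "card {l \<in> {1 .. 2 * CARD('n)}. eig_desc (block_diag Q R) l > 0} \<le> card {1 .. 2 * CARD('n)}"
      by (rule card_mono) auto
    then show ?thesis by simp
  qed
  have Ssub: "\<S> \<subseteq> {1..CARD('n + 'n)}" using assms(5) card2 by auto
  have finS: "finite \<S>" using Ssub finite_subset by blast
  have r1: "r \<ge> 1" using finS assms(4) by (simp add: r_def Suc_le_eq card_gt_0_iff)
  define Pr where "Pr = (\<Prod>l\<in>\<S>. eig_desc (block_diag Q R) l)"
  have eignn: "eig_desc (block_diag Q R) l \<ge> 0" if "l \<in> \<S>" for l
  proof -
    have "size (eigen_mset (block_diag Q R)) = CARD('n + 'n)" by (simp add: E)
    then have "eig_desc (block_diag Q R) l \<in># eigen_mset (block_diag Q R)"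
      using that Ssub by (intro eig_desc_mem) auto
    then show ?thesis using ddnn by (auto simp: E dd_def)
  qed
  have Prnn: "Pr \<ge> 0" unfolding Pr_def using eignn by (intro prod_nonneg) auto
  show ?thesis
  proof (cases "Pr = 0")
    case True
    then show ?thesis by (simp add: Pr_def[symmetric])
  next
    case False
    then have Prpos: "Pr > 0" using Prnn by simp
    define G where "G = Pr powr (1 / real r)"
    have Gpos: "G > 0" using Prpos by (simp add: G_def)
    define l where "l = exp 1 * real n powr (2 / real r) / (2 * Pr powr (1 / real r))"
    have lpos: "l > 0" using Prpos n1 by (simp add: l_def)
    define m where "m = real r / (2 * l)"
    define B where "B = real n * (\<Prod>k\<in>UNIV. (1 + 2 * l * dd k) powr (-1/2))"
    have Bb: "B \<le> exp (- (l * m))"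
    proof -
      define Pall where "Pall = (\<Prod>k\<in>UNIV. 1 + 2 * l * dd k)"
      have "(\<Prod>l'\<in>\<S>. 2 * l * max (eig_desc (block_diag Q R) l') 0) \<le> (\<Prod>k\<in>UNIV. 1 + 2 * l * max (dd k) 0)"
        by (rule eig_desc_bound[OF E[folded dd_def] Ssub]) (use lpos in auto)
      moreover have "(\<Prod>l'\<in>\<S>. 2 * l * max (eig_desc (block_diag Q R) l') 0) = (2 * l)^r * Pr"
        using eignn by (simp add: Pr_def r_def prod.distrib)
      moreover have "(\<Prod>k\<in>UNIV. 1 + 2 * l * max (dd k) 0) = Pall"
        using ddnn by (simp add: Pall_def)
      ultimately have le: "(2 * l)^r * Pr \<le> Pall" by simp
      have "B = real n * Pall powr (-1/2)" by (simp add: B_def Pall_def prod_powr_distrib)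
      also have "\<dots> \<le> exp (- (real r / 2))"
        by (rule B_calc[OF n1 r1 Prpos le l_def])
      also have "real r / 2 = l * m" using lpos by (simp add: m_def)
      finally show ?thesis .
    qed
    have A: "(\<integral>\<^sup>+\<omega>. ennreal (exp (- (l * Z \<omega>))) \<partial>?\<Omega>) \<le> ennreal B"
    proof -
      define C where "C = (\<Prod>k\<in>UNIV. (1 + 2 * l * dd k) powr (-1/2))"
      have "(\<integral>\<^sup>+\<omega>. ennreal (exp (- (l * Z \<omega>))) \<partial>?\<Omega>) \<le> (\<integral>\<^sup>+\<omega>. (\<Sum>j\<in>UNIV. ennreal (exp (- (l * zeta Q R j \<omega>)))) \<partial>?\<Omega>)"
      proof (rule nn_integral_mono)
        fix \<omega>
        obtain j0 where j0: "Z \<omega> = zeta Q R j0 \<omega>" using Zmin by blast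
        show "ennreal (exp (- (l * Z \<omega>))) \<le> (\<Sum>j\<in>UNIV. ennreal (exp (- (l * zeta Q R j \<omega>))))"
          unfolding j0 by (rule member_le_sum) auto
      qed
      also have "\<dots> = (\<Sum>j\<in>UNIV. (\<integral>\<^sup>+\<omega>. ennreal (exp (- (l * zeta Q R j \<omega>))) \<partial>?\<Omega>))"
        by (rule nn_integral_sum) auto
      also have "\<dots> = (\<Sum>j\<in>(UNIV :: 'n set). ennreal C)"
      proof (rule sum.cong[OF refl])
        fix j :: 'n
        have "(\<integral>\<^sup>+\<omega>. ennreal (exp (- (l * zeta Q R j \<omega>))) \<partial>?\<Omega>)
            = ennreal (\<Prod>i\<in>UNIV. (1 + 2 * l * d1 i) powr (-1/2)) * ennreal (\<Prod>i\<in>UNIV. (1 + 2 * l * d2 i) powr (-1/2))"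
          by (rule laplace_zeta[OF oP1 Qd d1 oP2 Rd d2 lpos])
        also have "\<dots> = ennreal ((\<Prod>i\<in>UNIV. (1 + 2 * l * d1 i) powr (-1/2)) * (\<Prod>i\<in>UNIV. (1 + 2 * l * d2 i) powr (-1/2)))"
          by (rule ennreal_mult[symmetric]) (auto intro: prod_nonneg)
        also have "(\<Prod>i\<in>UNIV. (1 + 2 * l * d1 i) powr (-1/2)) * (\<Prod>i\<in>UNIV. (1 + 2 * l * d2 i) powr (-1/2)) = C"
          by (simp add: C_def prod_UNIV_plus dd_def)
        finally show "(\<integral>\<^sup>+\<omega>. ennreal (exp (- (l * zeta Q R j \<omega>))) \<partial>?\<Omega>) = ennreal C" .
      qed
      also have "\<dots> = ennreal B"
        by (simp add: B_def C_def n_def ennreal_mult ennreal_of_nat_eq_real_of_nat prod_nonneg)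
      finally show ?thesis .
    qed
    define c where "c = 1 / l * exp (l * m)"
    have cpos: "c > 0" using lpos by (simp add: c_def)
    have mnn: "m \<ge> 0" using lpos by (simp add: m_def)
    have "ennreal (m + 1 / l) = ennreal m + ennreal (1 / l)"
      by (rule ennreal_plus) (use lpos mnn in auto)
    then have "ennreal (1 / l) + ennreal m = ennreal (m + 1 / l)" by (simp add: add.commute)
    also have "\<dots> = (\<integral>\<^sup>+\<omega>. ennreal (m + 1 / l) \<partial>?\<Omega>)"
      by (simp add: Om.emeasure_space_1)
    also have "\<dots> \<le> (\<integral>\<^sup>+\<omega>. ennreal (Z \<omega>) + ennreal c * ennreal (exp (- (l * Z \<omega>))) \<partial>?\<Omega>)"
    proof (rule nn_integral_mono)
      fix \<omega>
      have "m + 1 / l \<le> Z \<omega> + c * exp (- (l * Z \<omega>))"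
        unfolding c_def by (rule tangent[OF lpos])
      then have "ennreal (m + 1 / l) \<le> ennreal (Z \<omega> + c * exp (- (l * Z \<omega>)))" by (rule ennreal_leI)
      also have "\<dots> = ennreal (Z \<omega>) + ennreal c * ennreal (exp (- (l * Z \<omega>)))"
        using Znn[of \<omega>] cpos by (simp add: ennreal_plus ennreal_mult)
      finally show "ennreal (m + 1 / l) \<le> ennreal (Z \<omega>) + ennreal c * ennreal (exp (- (l * Z \<omega>)))" .
    qed
    also have "\<dots> = (\<integral>\<^sup>+\<omega>. ennreal (Z \<omega>) \<partial>?\<Omega>) + ennreal c * (\<integral>\<^sup>+\<omega>. ennreal (exp (- (l * Z \<omega>))) \<partial>?\<Omega>)"
      by (simp add: nn_integral_add nn_integral_cmult)
    also have "\<dots> \<le> (\<integral>\<^sup>+\<omega>. ennreal (Z \<omega>) \<partial>?\<Omega>) + ennreal c * ennreal B"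
      by (intro add_left_mono mult_left_mono A) auto
    also have "ennreal c * ennreal B \<le> ennreal (1 / l)"
    proof -
      have "c * B \<le> c * exp (- (l * m))" using Bb cpos by (intro mult_left_mono) auto
      also have "c * exp (- (l * m)) = 1 / l" by (simp add: c_def exp_minus field_simps)
      finally have "c * B \<le> 1 / l" .
      then have "ennreal (c * B) \<le> ennreal (1 / l)" by (rule ennreal_leI)
      moreover have "ennreal (c * B) = ennreal c * ennreal B" by (rule ennreal_mult') (use cpos in simp)
      ultimately show ?thesis by simp
    qed
    then have "(\<integral>\<^sup>+\<omega>. ennreal (Z \<omega>) \<partial>?\<Omega>) + ennreal c * ennreal B \<le> (\<integral>\<^sup>+\<omega>. ennreal (Z \<omega>) \<partial>?\<Omega>) + ennreal (1 / l)"
      by (rule add_left_mono)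
    finally have "ennreal (1 / l) + ennreal m \<le> ennreal (1 / l) + (\<integral>\<^sup>+\<omega>. ennreal (Z \<omega>) \<partial>?\<Omega>)"
      by (simp add: add.commute)
    then have T: "ennreal m \<le> (\<integral>\<^sup>+\<omega>. ennreal (Z \<omega>) \<partial>?\<Omega>)"
      by (simp add: ennreal_add_left_cancel_le)
    have "m = exp (-1) * real r * real n powr (- 2 / real r) * Pr powr (1 / real r)"
      unfolding m_def by (rule m_calc[OF n1 r1 Prpos l_def])
    then show ?thesis using T integrand by (simp add: r_def n_def Pr_def)
  qed
qed

end
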